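(* Let $H$ be a quasi-bialgebra, $A$ a left $H$-module algebra, $B$ a right $H$-module algebra and $\mathbb{A}$ an $H$-bicomodule algebra. Then $A\otimes B$, with multiplication $(a\otimes b)(a'\otimes b')=aa'\otimes bb'$ and actions $h\cdot(a\otimes b)\cdot h'=h\cdot a\otimes b\cdot h'$, is an $H$-bimodule algebra, and the map $\phi:(A\otimes B)\natural\mathbb{A}\to A\blacktriangleright\!\!<\mathbb{A}>\!\!\blacktriangleleft B$, $\phi((a\otimes b)\natural u)=a\blacktriangleright\!\!<u>\!\!\blacktriangleleft b$, is an algebra isomorphism.
   Context: Work over a field $k$. A quasi-bialgebra is $(H,\Delta,\varepsilon,\Phi)$ where $H$ is a unital associative algebra, $\Delta:H\to H\otimes H$ ($\Delta(h)=h_1\otimes h_2$) and $\varepsilon:H\to k$ are algebra maps, and $\Phi\in H^{\otimes 3}$ is invertible, such that $(id\otimes\Delta)\Delta(h)=\Phi(\Delta\otimes id)(\Delta(h))\Phi^{-1}$, $(id\otimes\varepsilon)\Delta(h)=h\otimes 1$, $(\varepsilon\otimes id)\Delta(h)=1\otimes h$, $(1\otimes\Phi)(id\otimes\Delta\otimes id)(\Phi)(\Phi\otimes 1)=(id\otimes id\otimes\Delta)(\Phi)(\Delta\otimes id\otimes id)(\Phi)$, $(id\otimes\varepsilon\otimes id)(\Phi)=1\otimes1\otimes1$. Write $\Phi=X^1\otimes X^2\otimes X^3$, $\Phi^{-1}=x^1\otimes x^2\otimes x^3$. A left $H$-module algebra is a left $H$-module $A$ with a unital multiplication with $(aa')a''=(X^1\cdot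 a)[(X^2\cdot a')(X^3\cdot a'')]$, $h\cdot(aa')=(h_1\cdot a)(h_2\cdot a')$, $h\cdot 1=\varepsilon(h)1$. A right $H$-module algebra is a right $H$-module $B$ with unital multiplication with $(bb')b''=(b\cdot x^1)[(b'\cdot x^2)(b''\cdot x^3)]$, $(bb')\cdot h=(b\cdot h_1)(b'\cdot h_2)$, $1\cdot h=\varepsilon(h)1$. An $H$-bimodule algebra is an $H$-bimodule $\mathcal{A}$ with unital multiplication such that $(\varphi\psi)\xi=(X^1\cdot\varphi\cdot x^1)[(X^2\cdot\psi\cdot x^2)(X^3\cdot\xi\cdot x^3)]$, $h\cdot(\varphi\psi)=(h_1\cdot\varphi)(h_2\cdot\psi)$, $(\varphi\psi)\cdot h=(\varphi\cdot h_1)(\psi\cdot h_2)$, $h\cdot1=1\cdot h=\varepsilon(h)1$. Left/right $H$-comodule algebras and $H$-bicomodule algebras $(\mathbb{A},\lambda,\rho,\Phi_\lambda,\Phi_\rho,\Phi_{\lambda,\rho})$ are as in the standard quasi-Hopf theory (Hausser–Nill): $\rho:\mathbb{A}\to\mathbb{A}\otimes H$, $\lambda:\mathbb{A}\to H\otimes\mathbb{A}$ algebra maps, $\Phi_\rho\in\mathbb{A}\otimes H\otimes H$, $\Phi_\lambda\in H\otimes H\otimes\mathbb{A}$, $\Phi_{\lambda,\rho}\in H\otimes\mathbb{A}\otimes H$ invertible, with $\Phi_\rho(\rho\otimes id)\rho(u)=(id\otimes\Delta)\rho(u)\Phi_\rho$, $(id\otimes\lambda)\lambda(u)\Phi_\lambda=\Phi_\lambda(\Delta\otimes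 id)\lambda(u)$, $\Phi_{\lambda,\rho}(\lambda\otimes id)\rho(u)=(id\otimes\rho)\lambda(u)\Phi_{\lambda,\rho}$, plus the pentagon-type and counit normalization conditions. Notation: $\rho(u)=u_{<0>}\otimes u_{<1>}$, $\lambda(u)=u_{[-1]}\otimes u_{[0]}$, $\Phi_\rho^{-1}=\tilde{x}^1_\rho\otimes\tilde{x}^2_\rho\otimes\tilde{x}^3_\rho$, $\Phi_\lambda^{-1}=\tilde{x}^1_\lambda\otimes\tilde{x}^2_\lambda\otimes\tilde{x}^3_\lambda$, $\Phi_{\lambda,\rho}^{-1}=\theta^1\otimes\theta^2\otimes\theta^3$. The L-R-smash product $\mathcal{A}\natural\mathbb{A}$ (for an $H$-bimodule algebra $\mathcal{A}$) is $\mathcal{A}\otimes\mathbb{A}$ with product $(\varphi\natural u)(\psi\natural u')=(\tilde{x}^1_{\lambda}\cdot\varphi\cdot\theta^3u'_{<1>}\tilde{x}^2_{\rho})(\tilde{x}^2_{\lambda}u_{[-1]}\theta^1\cdot\psi\cdot\tilde{x}^3_{\rho})\natural\tilde{x}^3_{\lambda}u_{[0]}\theta^2u'_{<0>}\tilde{x}^1_{\rho}$. The two-sided generalized smash product $A\blacktriangleright\!\!<\mathbb{A}>\!\!\blacktriangleleft B$ is $A\otimes\mathbb{A}\otimes B$ (elements $a\blacktriangleright\!\!<u>\!\!\blacktriangleleft b$) with the associative product $(a\blacktriangleright\!\!<u>\!\!\blacktriangleleft b)(a'\blacktriangleright\!\!<u'>\!\!\blacktriangleleft b')=(\tilde{x}^1_\lambda\cdot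 a)(\tilde{x}^2_\lambda u_{[-1]}\theta^1\cdot a')\blacktriangleright\!\!<\tilde{x}^3_\lambda u_{[0]}\theta^2u'_{<0>}\tilde{x}^1_\rho>\!\!\blacktriangleleft(b\cdot\theta^3u'_{<1>}\tilde{x}^2_\rho)(b'\cdot\tilde{x}^3_\rho)$. *)

theory Defs
  imports Main "HOL.Vector_Spaces" "HOL-Library.Function_Algebras"
begin

section \<open>Tensor products over a field k (concrete model)\<close>

text \<open>For k-vector spaces V, W (given by scalar multiplications s1, s2 on the types),
  the element sum_i v_i (x) w_i of V (x) W is modelled by the function
  (f,g) |-> sum_i f(v_i) g(w_i) on pairs of k-linear functionals.  Over a field
  this identifies V (x) W with the span of such functions (the canonical map
  V (x) W -> (V* x W* -> k) is injective).  Finite lists of pairs are the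
  "Sweedler"-type representations sum_i v_i (x) w_i.\<close>

definition tens2 ::
  "('k::field \<Rightarrow> 'v::ab_group_add \<Rightarrow> 'v) \<Rightarrow> ('k \<Rightarrow> 'w::ab_group_add \<Rightarrow> 'w) \<Rightarrow>
   ('v \<times> 'w) list \<Rightarrow> ('v \<Rightarrow> 'k) \<Rightarrow> ('w \<Rightarrow> 'k) \<Rightarrow> 'k" where
  "tens2 s1 s2 xs = (\<lambda>f g.
     if Vector_Spaces.linear s1 (*) f \<and> Vector_Spaces.linear s2 (*) g
     then (\<Sum>(v,w)\<leftarrow>xs. f v * g w) else 0)"

definition tens3 ::
  "('k::field \<Rightarrow> 'v::ab_group_add \<Rightarrow> 'v) \<Rightarrow> ('k \<Rightarrow> 'w::ab_group_add \<Rightarrow> 'w) \<Rightarrow>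
   ('k \<Rightarrow> 'z::ab_group_add \<Rightarrow> 'z) \<Rightarrow>
   ('v \<times> 'w \<times> 'z) list \<Rightarrow> ('v \<Rightarrow> 'k) \<Rightarrow> ('w \<Rightarrow> 'k) \<Rightarrow> ('z \<Rightarrow> 'k) \<Rightarrow> 'k" where
  "tens3 s1 s2 s3 xs = (\<lambda>f g h.
     if Vector_Spaces.linear s1 (*) f \<and> Vector_Spaces.linear s2 (*) g
        \<and> Vector_Spaces.linear s3 (*) h
     then (\<Sum>(v,w,z)\<leftarrow>xs. f v * g w * h z) else 0)"

definition tens4 ::
  "('k::field \<Rightarrow> 'v::ab_group_add \<Rightarrow> 'v) \<Rightarrow> ('k \<Rightarrow> 'w::ab_group_add \<Rightarrow> 'w) \<Rightarrow>
   ('k \<Rightarrow> 'z::ab_group_add \<Rightarrow> 'z) \<Rightarrow> ('k \<Rightarrow> 'y::ab_group_add \<Rightarrow> 'y) \<Rightarrow>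
   ('v \<times> 'w \<times> 'z \<times> 'y) list \<Rightarrow>
   ('v \<Rightarrow> 'k) \<Rightarrow> ('w \<Rightarrow> 'k) \<Rightarrow> ('z \<Rightarrow> 'k) \<Rightarrow> ('y \<Rightarrow> 'k) \<Rightarrow> 'k" where
  "tens4 s1 s2 s3 s4 xs = (\<lambda>f g h l.
     if Vector_Spaces.linear s1 (*) f \<and> Vector_Spaces.linear s2 (*) g
        \<and> Vector_Spaces.linear s3 (*) h \<and> Vector_Spaces.linear s4 (*) l
     then (\<Sum>(v,w,z,y)\<leftarrow>xs. f v * g w * h z * l y) else 0)"

definition sc2 :: "'k::times \<Rightarrow> ('x \<Rightarrow> 'y \<Rightarrow> 'k) \<Rightarrow> ('x \<Rightarrow> 'y \<Rightarrow> 'k)" where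
  "sc2 c T = (\<lambda>f g. c * T f g)"

definition sc3 :: "'k::times \<Rightarrow> ('x \<Rightarrow> 'y \<Rightarrow> 'z \<Rightarrow> 'k) \<Rightarrow> ('x \<Rightarrow> 'y \<Rightarrow> 'z \<Rightarrow> 'k)" where
  "sc3 c T = (\<lambda>f g h. c * T f g h)"

definition mul2 :: "('a::times \<times> 'b::times) list \<Rightarrow> ('a \<times> 'b) list \<Rightarrow> ('a \<times> 'b) list" where
  "mul2 xs ys = [(a * c, b * d). (a, b) \<leftarrow> xs, (c, d) \<leftarrow> ys]"

definition mul3 :: "('a::times \<times> 'b::times \<times> 'c::times) list \<Rightarrow> ('a \<times> 'b \<times> 'c) list
    \<Rightarrow> ('a \<times> 'b \<times> 'c) list" where
  "mul3 xs ys = [(a * a', b * b', c * c'). (a, b, c) \<leftarrow> xs, (a', b', c') \<leftarrow> ys]"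

definition mul4 :: "('a::times \<times> 'b::times \<times> 'c::times \<times> 'd::times) list \<Rightarrow>
    ('a \<times> 'b \<times> 'c \<times> 'd) list \<Rightarrow> ('a \<times> 'b \<times> 'c \<times> 'd) list" where
  "mul4 xs ys = [(a * a', b * b', c * c', d * d'). (a, b, c, d) \<leftarrow> xs, (a', b', c', d') \<leftarrow> ys]"

definition rep2 :: "('k::field \<Rightarrow> 'v::ab_group_add \<Rightarrow> 'v) \<Rightarrow> ('k \<Rightarrow> 'w::ab_group_add \<Rightarrow> 'w) \<Rightarrow>
    'v set \<Rightarrow> (('v \<Rightarrow> 'k) \<Rightarrow> ('w \<Rightarrow> 'k) \<Rightarrow> 'k) \<Rightarrow> ('v \<times> 'w) list" where
  "rep2 s1 s2 M T = (SOME xs. set (map fst xs) \<subseteq> M \<and> tens2 s1 s2 xs = T)"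

definition rep3 :: "('k::field \<Rightarrow> 'v::ab_group_add \<Rightarrow> 'v) \<Rightarrow> ('k \<Rightarrow> 'w::ab_group_add \<Rightarrow> 'w) \<Rightarrow>
    ('k \<Rightarrow> 'z::ab_group_add \<Rightarrow> 'z) \<Rightarrow>
    (('v \<Rightarrow> 'k) \<Rightarrow> ('w \<Rightarrow> 'k) \<Rightarrow> ('z \<Rightarrow> 'k) \<Rightarrow> 'k) \<Rightarrow> ('v \<times> 'w \<times> 'z) list" where
  "rep3 s1 s2 s3 T = (SOME xs. tens3 s1 s2 s3 xs = T)"

section \<open>Algebras and quasi-bialgebras\<close>

definition kalg :: "('k::field \<Rightarrow> 'r::ring_1 \<Rightarrow> 'r) \<Rightarrow> bool" where
  "kalg s \<longleftrightarrow> vector_space s \<and> (\<forall>c x y. s c (x * y) = s c x * y \<and> s c (x * y) = x * s c y)"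

definition alg_hom2 :: "('k::field \<Rightarrow> 'r::ring_1 \<Rightarrow> 'r) \<Rightarrow> ('k \<Rightarrow> 'x::ring_1 \<Rightarrow> 'x) \<Rightarrow>
    ('k \<Rightarrow> 'y::ring_1 \<Rightarrow> 'y) \<Rightarrow> ('r \<Rightarrow> ('x \<times> 'y) list) \<Rightarrow> bool" where
  "alg_hom2 s s1 s2 f \<longleftrightarrow>
     (\<forall>x y. tens2 s1 s2 (f (x + y)) = tens2 s1 s2 (f x @ f y)) \<and>
     (\<forall>c x. tens2 s1 s2 (f (s c x)) = sc2 c (tens2 s1 s2 (f x))) \<and>
     (\<forall>x y. tens2 s1 s2 (f (x * y)) = tens2 s1 s2 (mul2 (f x) (f y))) \<and>
     tens2 s1 s2 (f 1) = tens2 s1 s2 [(1, 1)]"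

text \<open>Quasi-bialgebra (H, Delta, eps, Phi) over k; Phii is Phi^{-1}.\<close>
definition qbialg :: "('k::field \<Rightarrow> 'h::ring_1 \<Rightarrow> 'h) \<Rightarrow> ('h \<Rightarrow> ('h \<times> 'h) list) \<Rightarrow>
    ('h \<Rightarrow> 'k) \<Rightarrow> ('h \<times> 'h \<times> 'h) list \<Rightarrow> ('h \<times> 'h \<times> 'h) list \<Rightarrow> bool" where
  "qbialg s D e Phi Phii \<longleftrightarrow>
     kalg s \<and> alg_hom2 s s s D \<and>
     (\<forall>x y. e (x + y) = e x + e y) \<and> (\<forall>c x. e (s c x) = c * e x) \<and>
     (\<forall>x y. e (x * y) = e x * e y) \<and> e 1 = 1 \<and>
     tens3 s s s (mul3 Phi Phii) = tens3 s s s [(1, 1, 1)] \<and>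
     tens3 s s s (mul3 Phii Phi) = tens3 s s s [(1, 1, 1)] \<and>
     (\<forall>h. tens3 s s s [(a, b1, b2). (a, b) \<leftarrow> D h, (b1, b2) \<leftarrow> D b]
          = tens3 s s s (mul3 (mul3 Phi [(a1, a2, b). (a, b) \<leftarrow> D h, (a1, a2) \<leftarrow> D a]) Phii)) \<and>
     (\<forall>h. (\<Sum>(a, b)\<leftarrow>D h. s (e b) a) = h) \<and>
     (\<forall>h. (\<Sum>(a, b)\<leftarrow>D h. s (e a) b) = h) \<and>
     tens4 s s s s (mul4 (mul4 [(1, x, y, z). (x, y, z) \<leftarrow> Phi]
                              [(x, y1, y2, z). (x, y, z) \<leftarrow> Phi, (y1, y2) \<leftarrow> D y])
                        [(x, y, z, 1). (x, y, z) \<leftarrow> Phi])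
       = tens4 s s s s (mul4 [(x, y, z1, z2). (x, y, z) \<leftarrow> Phi, (z1, z2) \<leftarrow> D z]
                             [(x1, x2, y, z). (x, y, z) \<leftarrow> Phi, (x1, x2) \<leftarrow> D x]) \<and>
     tens2 s s [(s (e y) x, z). (x, y, z) \<leftarrow> Phi] = tens2 s s [(1, 1)]"

section \<open>Module algebras\<close>

definition lmod_alg :: "('k::field \<Rightarrow> 'h::ring_1 \<Rightarrow> 'h) \<Rightarrow> ('h \<Rightarrow> ('h \<times> 'h) list) \<Rightarrow>
    ('h \<Rightarrow> 'k) \<Rightarrow> ('h \<times> 'h \<times> 'h) list \<Rightarrow>
    ('k \<Rightarrow> 'a::ab_group_add \<Rightarrow> 'a) \<Rightarrow> ('a \<Rightarrow> 'a \<Rightarrow> 'a) \<Rightarrow> 'a \<Rightarrow> ('h \<Rightarrow> 'a \<Rightarrow> 'a) \<Rightarrow> bool" where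
  "lmod_alg sH D e Phi s m one act \<longleftrightarrow>
     vector_space s \<and>
     (\<forall>a. Vector_Spaces.linear s s (m a)) \<and> (\<forall>b. Vector_Spaces.linear s s (\<lambda>a. m a b)) \<and>
     (\<forall>a. Vector_Spaces.linear sH s (\<lambda>h. act h a)) \<and> (\<forall>h. Vector_Spaces.linear s s (act h)) \<and>
     (\<forall>a. act 1 a = a) \<and> (\<forall>h g a. act (h * g) a = act h (act g a)) \<and>
     (\<forall>a. m one a = a \<and> m a one = a) \<and>
     (\<forall>a a' a''. m (m a a') a'' = (\<Sum>(x, y, z)\<leftarrow>Phi. m (act x a) (m (act y a') (act z a'')))) \<and>
     (\<forall>h a a'. act h (m a a') = (\<Sum>(h1, h2)\<leftarrow>D h. m (act h1 a) (act h2 a'))) \<and>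
     (\<forall>h. act h one = s (e h) one)"

definition rmod_alg :: "('k::field \<Rightarrow> 'h::ring_1 \<Rightarrow> 'h) \<Rightarrow> ('h \<Rightarrow> ('h \<times> 'h) list) \<Rightarrow>
    ('h \<Rightarrow> 'k) \<Rightarrow> ('h \<times> 'h \<times> 'h) list \<Rightarrow>
    ('k \<Rightarrow> 'b::ab_group_add \<Rightarrow> 'b) \<Rightarrow> ('b \<Rightarrow> 'b \<Rightarrow> 'b) \<Rightarrow> 'b \<Rightarrow> ('b \<Rightarrow> 'h \<Rightarrow> 'b) \<Rightarrow> bool" where
  "rmod_alg sH D e Phii s m one act \<longleftrightarrow>
     vector_space s \<and>
     (\<forall>a. Vector_Spaces.linear s s (m a)) \<and> (\<forall>b. Vector_Spaces.linear s s (\<lambda>a. m a b)) \<and>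
     (\<forall>b. Vector_Spaces.linear sH s (\<lambda>h. act b h)) \<and> (\<forall>h. Vector_Spaces.linear s s (\<lambda>b. act b h)) \<and>
     (\<forall>b. act b 1 = b) \<and> (\<forall>h g b. act b (h * g) = act (act b h) g) \<and>
     (\<forall>b. m one b = b \<and> m b one = b) \<and>
     (\<forall>b b' b''. m (m b b') b'' = (\<Sum>(x, y, z)\<leftarrow>Phii. m (act b x) (m (act b' y) (act b'' z)))) \<and>
     (\<forall>h b b'. act (m b b') h = (\<Sum>(h1, h2)\<leftarrow>D h. m (act b h1) (act b' h2))) \<and>
     (\<forall>h. act one h = s (e h) one)"

text \<open>H-bimodule algebra with carrier M (a subspace of the ambient vector space).\<close>
definition bimod_alg :: "('k::field \<Rightarrow> 'h::ring_1 \<Rightarrow> 'h) \<Rightarrow> ('h \<Rightarrow> ('h \<times> 'h) list) \<Rightarrow>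
    ('h \<Rightarrow> 'k) \<Rightarrow> ('h \<times> 'h \<times> 'h) list \<Rightarrow> ('h \<times> 'h \<times> 'h) list \<Rightarrow>
    ('k \<Rightarrow> 'm::ab_group_add \<Rightarrow> 'm) \<Rightarrow> 'm set \<Rightarrow> ('m \<Rightarrow> 'm \<Rightarrow> 'm) \<Rightarrow> 'm \<Rightarrow>
    ('h \<Rightarrow> 'm \<Rightarrow> 'm) \<Rightarrow> ('m \<Rightarrow> 'h \<Rightarrow> 'm) \<Rightarrow> bool" where
  "bimod_alg sH D e Phi Phii s M m one la ra \<longleftrightarrow>
     vector_space s \<and> 0 \<in> M \<and> (\<forall>x\<in>M. \<forall>y\<in>M. x + y \<in> M) \<and> (\<forall>c. \<forall>x\<in>M. s c x \<in> M) \<and>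
     one \<in> M \<and> (\<forall>x\<in>M. \<forall>y\<in>M. m x y \<in> M) \<and> (\<forall>h. \<forall>x\<in>M. la h x \<in> M \<and> ra x h \<in> M) \<and>
     (\<forall>x\<in>M. \<forall>y\<in>M. \<forall>z\<in>M. m (x + y) z = m x z + m y z \<and> m z (x + y) = m z x + m z y) \<and>
     (\<forall>c. \<forall>x\<in>M. \<forall>y\<in>M. m (s c x) y = s c (m x y) \<and> m x (s c y) = s c (m x y)) \<and>
     (\<forall>h g. \<forall>x\<in>M. la (h + g) x = la h x + la g x \<and> ra x (h + g) = ra x h + ra x g) \<and>
     (\<forall>c h. \<forall>x\<in>M. la (sH c h) x = s c (la h x) \<and> ra x (sH c h) = s c (ra x h)) \<and>
     (\<forall>h. \<forall>x\<in>M. \<forall>y\<in>M. la h (x + y) = la h x + la h y \<and> ra (x + y) h = ra x h + ra y h) \<and>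
     (\<forall>c h. \<forall>x\<in>M. la h (s c x) = s c (la h x) \<and> ra (s c x) h = s c (ra x h)) \<and>
     (\<forall>x\<in>M. la 1 x = x \<and> ra x 1 = x) \<and>
     (\<forall>h g. \<forall>x\<in>M. la (h * g) x = la h (la g x) \<and> ra x (h * g) = ra (ra x h) g
                   \<and> la h (ra x g) = ra (la h x) g) \<and>
     (\<forall>x\<in>M. m one x = x \<and> m x one = x) \<and>
     (\<forall>h. la h one = s (e h) one \<and> ra one h = s (e h) one) \<and>
     (\<forall>x\<in>M. \<forall>y\<in>M. \<forall>z\<in>M. m (m x y) z =
        (\<Sum>(X1, X2, X3)\<leftarrow>Phi. \<Sum>(x1, x2, x3)\<leftarrow>Phii.
           m (la X1 (ra x x1)) (m (la X2 (ra y x2)) (la X3 (ra z x3))))) \<and>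
     (\<forall>h. \<forall>x\<in>M. \<forall>y\<in>M. la h (m x y) = (\<Sum>(h1, h2)\<leftarrow>D h. m (la h1 x) (la h2 y))
                       \<and> ra (m x y) h = (\<Sum>(h1, h2)\<leftarrow>D h. m (ra x h1) (ra y h2)))"

section \<open>Comodule algebras\<close>

text \<open>Right H-comodule algebra (U, rho, Phir); Phiri = Phir^{-1}.\<close>
definition rcomod_alg :: "('k::field \<Rightarrow> 'h::ring_1 \<Rightarrow> 'h) \<Rightarrow> ('h \<Rightarrow> ('h \<times> 'h) list) \<Rightarrow>
    ('h \<Rightarrow> 'k) \<Rightarrow> ('h \<times> 'h \<times> 'h) list \<Rightarrow>
    ('k \<Rightarrow> 'u::ring_1 \<Rightarrow> 'u) \<Rightarrow> ('u \<Rightarrow> ('u \<times> 'h) list) \<Rightarrow>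
    ('u \<times> 'h \<times> 'h) list \<Rightarrow> ('u \<times> 'h \<times> 'h) list \<Rightarrow> bool" where
  "rcomod_alg sH D e Phi sU rho Phir Phiri \<longleftrightarrow>
     kalg sU \<and> alg_hom2 sU sU sH rho \<and>
     tens3 sU sH sH (mul3 Phir Phiri) = tens3 sU sH sH [(1, 1, 1)] \<and>
     tens3 sU sH sH (mul3 Phiri Phir) = tens3 sU sH sH [(1, 1, 1)] \<and>
     (\<forall>u. tens3 sU sH sH (mul3 Phir [(a0, a1, b). (a, b) \<leftarrow> rho u, (a0, a1) \<leftarrow> rho a])
        = tens3 sU sH sH (mul3 [(a, b1, b2). (a, b) \<leftarrow> rho u, (b1, b2) \<leftarrow> D b] Phir)) \<and>
     tens4 sU sH sH sH (mul4 (mul4 [(1, x, y, z). (x, y, z) \<leftarrow> Phi]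
                                   [(a, b1, b2, c). (a, b, c) \<leftarrow> Phir, (b1, b2) \<leftarrow> D b])
                             [(a, b, c, 1). (a, b, c) \<leftarrow> Phir])
       = tens4 sU sH sH sH (mul4 [(a, b, c1, c2). (a, b, c) \<leftarrow> Phir, (c1, c2) \<leftarrow> D c]
                                 [(a0, a1, b, c). (a, b, c) \<leftarrow> Phir, (a0, a1) \<leftarrow> rho a]) \<and>
     (\<forall>u. (\<Sum>(a, b)\<leftarrow>rho u. sU (e b) a) = u) \<and>
     tens2 sU sH [(sU (e b) a, c). (a, b, c) \<leftarrow> Phir] = tens2 sU sH [(1, 1)] \<and>
     tens2 sU sH [(sU (e c) a, b). (a, b, c) \<leftarrow> Phir] = tens2 sU sH [(1, 1)]"

text \<open>Left H-comodule algebra (U, lam, Phil); Phili = Phil^{-1}.\<close>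
definition lcomod_alg :: "('k::field \<Rightarrow> 'h::ring_1 \<Rightarrow> 'h) \<Rightarrow> ('h \<Rightarrow> ('h \<times> 'h) list) \<Rightarrow>
    ('h \<Rightarrow> 'k) \<Rightarrow> ('h \<times> 'h \<times> 'h) list \<Rightarrow>
    ('k \<Rightarrow> 'u::ring_1 \<Rightarrow> 'u) \<Rightarrow> ('u \<Rightarrow> ('h \<times> 'u) list) \<Rightarrow>
    ('h \<times> 'h \<times> 'u) list \<Rightarrow> ('h \<times> 'h \<times> 'u) list \<Rightarrow> bool" where
  "lcomod_alg sH D e Phi sU lam Phil Phili \<longleftrightarrow>
     kalg sU \<and> alg_hom2 sU sH sU lam \<and>
     tens3 sH sH sU (mul3 Phil Phili) = tens3 sH sH sU [(1, 1, 1)] \<and>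
     tens3 sH sH sU (mul3 Phili Phil) = tens3 sH sH sU [(1, 1, 1)] \<and>
     (\<forall>u. tens3 sH sH sU (mul3 [(h, h1, v). (h, w) \<leftarrow> lam u, (h1, v) \<leftarrow> lam w] Phil)
        = tens3 sH sH sU (mul3 Phil [(h1, h2, w). (h, w) \<leftarrow> lam u, (h1, h2) \<leftarrow> D h])) \<and>
     tens4 sH sH sH sU (mul4 (mul4 [(1, a, b, c). (a, b, c) \<leftarrow> Phil]
                                   [(a, b1, b2, c). (a, b, c) \<leftarrow> Phil, (b1, b2) \<leftarrow> D b])
                             [(x, y, z, 1). (x, y, z) \<leftarrow> Phi])
       = tens4 sH sH sH sU (mul4 [(a, b, c1, c0). (a, b, c) \<leftarrow> Phil, (c1, c0) \<leftarrow> lam c]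
                                 [(a1, a2, b, c). (a, b, c) \<leftarrow> Phil, (a1, a2) \<leftarrow> D a]) \<and>
     (\<forall>u. (\<Sum>(h, w)\<leftarrow>lam u. sU (e h) w) = u) \<and>
     tens2 sH sU [(sH (e b) a, c). (a, b, c) \<leftarrow> Phil] = tens2 sH sU [(1, 1)] \<and>
     tens2 sH sU [(sH (e a) b, c). (a, b, c) \<leftarrow> Phil] = tens2 sH sU [(1, 1)]"

text \<open>H-bicomodule algebra (U, lam, rho, Phil, Phir, Philr) (Hausser-Nill);
  the ...i lists are the inverses.\<close>
definition bicomod_alg :: "('k::field \<Rightarrow> 'h::ring_1 \<Rightarrow> 'h) \<Rightarrow> ('h \<Rightarrow> ('h \<times> 'h) list) \<Rightarrow>
    ('h \<Rightarrow> 'k) \<Rightarrow> ('h \<times> 'h \<times> 'h) list \<Rightarrow>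
    ('k \<Rightarrow> 'u::ring_1 \<Rightarrow> 'u) \<Rightarrow> ('u \<Rightarrow> ('h \<times> 'u) list) \<Rightarrow> ('u \<Rightarrow> ('u \<times> 'h) list) \<Rightarrow>
    ('h \<times> 'h \<times> 'u) list \<Rightarrow> ('h \<times> 'h \<times> 'u) list \<Rightarrow>
    ('u \<times> 'h \<times> 'h) list \<Rightarrow> ('u \<times> 'h \<times> 'h) list \<Rightarrow>
    ('h \<times> 'u \<times> 'h) list \<Rightarrow> ('h \<times> 'u \<times> 'h) list \<Rightarrow> bool" where
  "bicomod_alg sH D e Phi sU lam rho Phil Phili Phir Phiri Philr Philri \<longleftrightarrow>
     lcomod_alg sH D e Phi sU lam Phil Phili \<and>
     rcomod_alg sH D e Phi sU rho Phir Phiri \<and>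
     tens3 sH sU sH (mul3 Philr Philri) = tens3 sH sU sH [(1, 1, 1)] \<and>
     tens3 sH sU sH (mul3 Philri Philr) = tens3 sH sU sH [(1, 1, 1)] \<and>
     (\<forall>u. tens3 sH sU sH (mul3 Philr [(h, w, b). (a, b) \<leftarrow> rho u, (h, w) \<leftarrow> lam a])
        = tens3 sH sU sH (mul3 [(h, w0, w1). (h, w) \<leftarrow> lam u, (w0, w1) \<leftarrow> rho w] Philr)) \<and>
     tens4 sH sH sU sH (mul4 (mul4 [(1, a, b, c). (a, b, c) \<leftarrow> Philr]
                                   [(a, b1, b2, c). (a, b, c) \<leftarrow> Philr, (b1, b2) \<leftarrow> lam b])
                             [(a, b, c, 1). (a, b, c) \<leftarrow> Phil])
       = tens4 sH sH sU sH (mul4 [(a, b, c0, c1). (a, b, c) \<leftarrow> Phil, (c0, c1) \<leftarrow> rho c]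
                                 [(a1, a2, b, c). (a, b, c) \<leftarrow> Philr, (a1, a2) \<leftarrow> D a]) \<and>
     tens4 sH sU sH sH (mul4 (mul4 [(1, a, b, c). (a, b, c) \<leftarrow> Phir]
                                   [(a, b0, b1, c). (a, b, c) \<leftarrow> Philr, (b0, b1) \<leftarrow> rho b])
                             [(a, b, c, 1). (a, b, c) \<leftarrow> Philr])
       = tens4 sH sU sH sH (mul4 [(a, b, c1, c2). (a, b, c) \<leftarrow> Philr, (c1, c2) \<leftarrow> D c]
                                 [(a1, a0, b, c). (a, b, c) \<leftarrow> Phir, (a1, a0) \<leftarrow> lam a])"

section \<open>The algebra A (x) B and the two smash products\<close>

definition ab_carrier :: "('k::field \<Rightarrow> 'a::ab_group_add \<Rightarrow> 'a) \<Rightarrow> ('k \<Rightarrow> 'b::ab_group_add \<Rightarrow> 'b)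
    \<Rightarrow> (('a \<Rightarrow> 'k) \<Rightarrow> ('b \<Rightarrow> 'k) \<Rightarrow> 'k) set" where
  "ab_carrier sA sB = range (tens2 sA sB)"

definition ab_mult :: "('k::field \<Rightarrow> 'a::ab_group_add \<Rightarrow> 'a) \<Rightarrow> ('k \<Rightarrow> 'b::ab_group_add \<Rightarrow> 'b) \<Rightarrow>
    ('a \<Rightarrow> 'a \<Rightarrow> 'a) \<Rightarrow> ('b \<Rightarrow> 'b \<Rightarrow> 'b) \<Rightarrow>
    (('a \<Rightarrow> 'k) \<Rightarrow> ('b \<Rightarrow> 'k) \<Rightarrow> 'k) \<Rightarrow> (('a \<Rightarrow> 'k) \<Rightarrow> ('b \<Rightarrow> 'k) \<Rightarrow> 'k) \<Rightarrow>
    (('a \<Rightarrow> 'k) \<Rightarrow> ('b \<Rightarrow> 'k) \<Rightarrow> 'k)" where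
  "ab_mult sA sB mA mB T S = tens2 sA sB
     [(mA a a', mB b b'). (a, b) \<leftarrow> rep2 sA sB UNIV T, (a', b') \<leftarrow> rep2 sA sB UNIV S]"

definition ab_one :: "('k::field \<Rightarrow> 'a::ab_group_add \<Rightarrow> 'a) \<Rightarrow> ('k \<Rightarrow> 'b::ab_group_add \<Rightarrow> 'b) \<Rightarrow>
    'a \<Rightarrow> 'b \<Rightarrow> (('a \<Rightarrow> 'k) \<Rightarrow> ('b \<Rightarrow> 'k) \<Rightarrow> 'k)" where
  "ab_one sA sB oneA oneB = tens2 sA sB [(oneA, oneB)]"

definition ab_lact :: "('k::field \<Rightarrow> 'a::ab_group_add \<Rightarrow> 'a) \<Rightarrow> ('k \<Rightarrow> 'b::ab_group_add \<Rightarrow> 'b) \<Rightarrow>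
    ('h \<Rightarrow> 'a \<Rightarrow> 'a) \<Rightarrow> 'h \<Rightarrow> (('a \<Rightarrow> 'k) \<Rightarrow> ('b \<Rightarrow> 'k) \<Rightarrow> 'k) \<Rightarrow>
    (('a \<Rightarrow> 'k) \<Rightarrow> ('b \<Rightarrow> 'k) \<Rightarrow> 'k)" where
  "ab_lact sA sB act h T = tens2 sA sB [(act h a, b). (a, b) \<leftarrow> rep2 sA sB UNIV T]"

definition ab_ract :: "('k::field \<Rightarrow> 'a::ab_group_add \<Rightarrow> 'a) \<Rightarrow> ('k \<Rightarrow> 'b::ab_group_add \<Rightarrow> 'b) \<Rightarrow>
    ('b \<Rightarrow> 'h \<Rightarrow> 'b) \<Rightarrow> (('a \<Rightarrow> 'k) \<Rightarrow> ('b \<Rightarrow> 'k) \<Rightarrow> 'k) \<Rightarrow> 'h \<Rightarrow>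
    (('a \<Rightarrow> 'k) \<Rightarrow> ('b \<Rightarrow> 'k) \<Rightarrow> 'k)" where
  "ab_ract sA sB act T h = tens2 sA sB [(a, act b h). (a, b) \<leftarrow> rep2 sA sB UNIV T]"

definition lr_carrier :: "('k::field \<Rightarrow> 'm::ab_group_add \<Rightarrow> 'm) \<Rightarrow> 'm set \<Rightarrow>
    ('k \<Rightarrow> 'u::ab_group_add \<Rightarrow> 'u) \<Rightarrow> (('m \<Rightarrow> 'k) \<Rightarrow> ('u \<Rightarrow> 'k) \<Rightarrow> 'k) set" where
  "lr_carrier s M sU = {tens2 s sU xs | xs. set (map fst xs) \<subseteq> M}"

definition lr_pure :: "('m \<Rightarrow> 'm \<Rightarrow> 'm) \<Rightarrow> ('h::ring_1 \<Rightarrow> 'm \<Rightarrow> 'm) \<Rightarrow> ('m \<Rightarrow> 'h \<Rightarrow> 'm) \<Rightarrow>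
    ('u::ring_1 \<Rightarrow> ('h \<times> 'u) list) \<Rightarrow> ('u \<Rightarrow> ('u \<times> 'h) list) \<Rightarrow>
    ('h \<times> 'h \<times> 'u) list \<Rightarrow> ('u \<times> 'h \<times> 'h) list \<Rightarrow> ('h \<times> 'u \<times> 'h) list \<Rightarrow>
    'm \<times> 'u \<Rightarrow> 'm \<times> 'u \<Rightarrow> ('m \<times> 'u) list" where
  "lr_pure m la ra lam rho Phili Phiri Philri p q =
     (case p of (\<phi>, u) \<Rightarrow> case q of (\<psi>, u') \<Rightarrow>
       [(m (la y1 (ra \<phi> (t3 * r1 * z2))) (la (y2 * l1 * t1) (ra \<psi> z3)),
         y3 * l0 * t2 * r0 * z1).
         (y1, y2, y3) \<leftarrow> Phili, (l1, l0) \<leftarrow> lam u, (t1, t2, t3) \<leftarrow> Philri,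
         (r0, r1) \<leftarrow> rho u', (z1, z2, z3) \<leftarrow> Phiri])"

definition lr_mult :: "('k::field \<Rightarrow> 'm::ab_group_add \<Rightarrow> 'm) \<Rightarrow> 'm set \<Rightarrow>
    ('m \<Rightarrow> 'm \<Rightarrow> 'm) \<Rightarrow> ('h::ring_1 \<Rightarrow> 'm \<Rightarrow> 'm) \<Rightarrow> ('m \<Rightarrow> 'h \<Rightarrow> 'm) \<Rightarrow>
    ('k \<Rightarrow> 'u::ring_1 \<Rightarrow> 'u) \<Rightarrow> ('u \<Rightarrow> ('h \<times> 'u) list) \<Rightarrow> ('u \<Rightarrow> ('u \<times> 'h) list) \<Rightarrow>
    ('h \<times> 'h \<times> 'u) list \<Rightarrow> ('u \<times> 'h \<times> 'h) list \<Rightarrow> ('h \<times> 'u \<times> 'h) list \<Rightarrow>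
    (('m \<Rightarrow> 'k) \<Rightarrow> ('u \<Rightarrow> 'k) \<Rightarrow> 'k) \<Rightarrow> (('m \<Rightarrow> 'k) \<Rightarrow> ('u \<Rightarrow> 'k) \<Rightarrow> 'k) \<Rightarrow>
    (('m \<Rightarrow> 'k) \<Rightarrow> ('u \<Rightarrow> 'k) \<Rightarrow> 'k)" where
  "lr_mult s M m la ra sU lam rho Phili Phiri Philri T S = tens2 s sU
     (concat [lr_pure m la ra lam rho Phili Phiri Philri p q.
                p \<leftarrow> rep2 s sU M T, q \<leftarrow> rep2 s sU M S])"

definition lr_one :: "('k::field \<Rightarrow> 'm::ab_group_add \<Rightarrow> 'm) \<Rightarrow> 'm \<Rightarrow>
    ('k \<Rightarrow> 'u::ring_1 \<Rightarrow> 'u) \<Rightarrow> (('m \<Rightarrow> 'k) \<Rightarrow> ('u \<Rightarrow> 'k) \<Rightarrow> 'k)" where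
  "lr_one s one sU = tens2 s sU [(one, 1)]"

definition ts_carrier :: "('k::field \<Rightarrow> 'a::ab_group_add \<Rightarrow> 'a) \<Rightarrow> ('k \<Rightarrow> 'u::ab_group_add \<Rightarrow> 'u) \<Rightarrow>
    ('k \<Rightarrow> 'b::ab_group_add \<Rightarrow> 'b) \<Rightarrow> (('a \<Rightarrow> 'k) \<Rightarrow> ('u \<Rightarrow> 'k) \<Rightarrow> ('b \<Rightarrow> 'k) \<Rightarrow> 'k) set" where
  "ts_carrier sA sU sB = range (tens3 sA sU sB)"

definition ts_pure :: "('a \<Rightarrow> 'a \<Rightarrow> 'a) \<Rightarrow> ('h::ring_1 \<Rightarrow> 'a \<Rightarrow> 'a) \<Rightarrow>
    ('b \<Rightarrow> 'b \<Rightarrow> 'b) \<Rightarrow> ('b \<Rightarrow> 'h \<Rightarrow> 'b) \<Rightarrow>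
    ('u::ring_1 \<Rightarrow> ('h \<times> 'u) list) \<Rightarrow> ('u \<Rightarrow> ('u \<times> 'h) list) \<Rightarrow>
    ('h \<times> 'h \<times> 'u) list \<Rightarrow> ('u \<times> 'h \<times> 'h) list \<Rightarrow> ('h \<times> 'u \<times> 'h) list \<Rightarrow>
    'a \<times> 'u \<times> 'b \<Rightarrow> 'a \<times> 'u \<times> 'b \<Rightarrow> ('a \<times> 'u \<times> 'b) list" where
  "ts_pure mA actA mB actB lam rho Phili Phiri Philri p q =
     (case p of (a, u, b) \<Rightarrow> case q of (a', u', b') \<Rightarrow>
       [(mA (actA y1 a) (actA (y2 * l1 * t1) a'),
         y3 * l0 * t2 * r0 * z1,
         mB (actB b (t3 * r1 * z2)) (actB b' z3)).
         (y1, y2, y3) \<leftarrow> Phili, (l1, l0) \<leftarrow> lam u, (t1, t2, t3) \<leftarrow> Philri,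
         (r0, r1) \<leftarrow> rho u', (z1, z2, z3) \<leftarrow> Phiri])"

definition ts_mult :: "('k::field \<Rightarrow> 'a::ab_group_add \<Rightarrow> 'a) \<Rightarrow> ('k \<Rightarrow> 'u::ring_1 \<Rightarrow> 'u) \<Rightarrow>
    ('k \<Rightarrow> 'b::ab_group_add \<Rightarrow> 'b) \<Rightarrow>
    ('a \<Rightarrow> 'a \<Rightarrow> 'a) \<Rightarrow> ('h::ring_1 \<Rightarrow> 'a \<Rightarrow> 'a) \<Rightarrow>
    ('b \<Rightarrow> 'b \<Rightarrow> 'b) \<Rightarrow> ('b \<Rightarrow> 'h \<Rightarrow> 'b) \<Rightarrow>
    ('u \<Rightarrow> ('h \<times> 'u) list) \<Rightarrow> ('u \<Rightarrow> ('u \<times> 'h) list) \<Rightarrow>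
    ('h \<times> 'h \<times> 'u) list \<Rightarrow> ('u \<times> 'h \<times> 'h) list \<Rightarrow> ('h \<times> 'u \<times> 'h) list \<Rightarrow>
    (('a \<Rightarrow> 'k) \<Rightarrow> ('u \<Rightarrow> 'k) \<Rightarrow> ('b \<Rightarrow> 'k) \<Rightarrow> 'k) \<Rightarrow>
    (('a \<Rightarrow> 'k) \<Rightarrow> ('u \<Rightarrow> 'k) \<Rightarrow> ('b \<Rightarrow> 'k) \<Rightarrow> 'k) \<Rightarrow>
    (('a \<Rightarrow> 'k) \<Rightarrow> ('u \<Rightarrow> 'k) \<Rightarrow> ('b \<Rightarrow> 'k) \<Rightarrow> 'k)" where
  "ts_mult sA sU sB mA actA mB actB lam rho Phili Phiri Philri T S = tens3 sA sU sB
     (concat [ts_pure mA actA mB actB lam rho Phili Phiri Philri p q.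
                p \<leftarrow> rep3 sA sU sB T, q \<leftarrow> rep3 sA sU sB S])"

definition ts_one :: "('k::field \<Rightarrow> 'a::ab_group_add \<Rightarrow> 'a) \<Rightarrow> ('k \<Rightarrow> 'u::ring_1 \<Rightarrow> 'u) \<Rightarrow>
    ('k \<Rightarrow> 'b::ab_group_add \<Rightarrow> 'b) \<Rightarrow> 'a \<Rightarrow> 'b \<Rightarrow>
    (('a \<Rightarrow> 'k) \<Rightarrow> ('u \<Rightarrow> 'k) \<Rightarrow> ('b \<Rightarrow> 'k) \<Rightarrow> 'k)" where
  "ts_one sA sU sB oneA oneB = tens3 sA sU sB [(oneA, 1, oneB)]"

definition phi_map :: "('k::field \<Rightarrow> 'a::ab_group_add \<Rightarrow> 'a) \<Rightarrow> ('k \<Rightarrow> 'u::ring_1 \<Rightarrow> 'u) \<Rightarrow>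
    ('k \<Rightarrow> 'b::ab_group_add \<Rightarrow> 'b) \<Rightarrow>
    (((('a \<Rightarrow> 'k) \<Rightarrow> ('b \<Rightarrow> 'k) \<Rightarrow> 'k) \<Rightarrow> 'k) \<Rightarrow> ('u \<Rightarrow> 'k) \<Rightarrow> 'k) \<Rightarrow>
    (('a \<Rightarrow> 'k) \<Rightarrow> ('u \<Rightarrow> 'k) \<Rightarrow> ('b \<Rightarrow> 'k) \<Rightarrow> 'k)" where
  "phi_map sA sU sB T = tens3 sA sU sB
     (concat [[(a, u, b). (a, b) \<leftarrow> rep2 sA sB UNIV x].
                (x, u) \<leftarrow> rep2 sc2 sU (ab_carrier sA sB) T])"

end

theory Submission
  imports Defs
begin


lemma vs_k: "vector_space ((*) :: 'k::field \<Rightarrow> 'k \<Rightarrow> 'k)"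
  by unfold_locales (simp_all add: algebra_simps)

lemma lin_iff: "Vector_Spaces.linear s ((*) :: 'k::field \<Rightarrow> 'k \<Rightarrow> 'k) f \<longleftrightarrow>
   vector_space s \<and> (\<forall>x y. f (x + y) = f x + f y) \<and> (\<forall>c x. f (s c x) = c * f x)"
  unfolding linear_iff by (simp add: vs_k)
lemma lin_add: "Vector_Spaces.linear s ((*) :: 'k::field \<Rightarrow> 'k \<Rightarrow> 'k) f \<Longrightarrow> f (x + y) = f x + f y"
  by (simp add: lin_iff)
lemma lin_scale: "Vector_Spaces.linear s ((*) :: 'k::field \<Rightarrow> 'k \<Rightarrow> 'k) f \<Longrightarrow> f (s c x) = c * f x"
  by (simp add: lin_iff)
lemma lin_vs: "Vector_Spaces.linear s ((*) :: 'k::field \<Rightarrow> 'k \<Rightarrow> 'k) f \<Longrightarrow> vector_space s"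
  by (simp add: lin_iff)

lemma additive_zero: assumes "(\<And>x y. f (x + y) = f x + (f y :: 'k::ab_group_add))" shows "f (0::'a::monoid_add) = 0"
proof -
  have "f (0 + 0) = f 0 + f 0" by (rule assms)
  then show ?thesis by simp
qed
lemma additive_sum_list: assumes "(\<And>x y. f (x + y) = f x + (f y :: 'k::ab_group_add))"
  shows "f (\<Sum>x\<leftarrow>xs. (F x :: 'a::monoid_add)) = (\<Sum>x\<leftarrow>xs. f (F x))"
  by (induction xs) (simp_all add: additive_zero[OF assms] assms)

lemma lin_sum_list: "Vector_Spaces.linear s ((*) :: 'k::field \<Rightarrow> 'k \<Rightarrow> 'k) f \<Longrightarrow>
   f (\<Sum>x\<leftarrow>xs. F x) = (\<Sum>x\<leftarrow>xs. f (F x))"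
  by (rule additive_sum_list) (simp add: lin_add)

lemma sum_list_sum_swap: "(\<Sum>x\<leftarrow>xs. sum (F x) B) = (\<Sum>b\<in>B. \<Sum>x\<leftarrow>xs. F x b)"
  by (induction xs) (auto simp: sum.distrib)

lemma sum_list_swap: "(\<Sum>x\<leftarrow>xs. \<Sum>y\<leftarrow>ys. F x y) = (\<Sum>y\<leftarrow>ys. \<Sum>x\<leftarrow>xs. (F x y :: 'a::comm_monoid_add))"
  by (induction xs) (auto simp: sum_list_addf)

lemma separation:
  assumes "vector_space s" "v \<noteq> 0"
  shows "\<exists>f. Vector_Spaces.linear s ((*) :: 'k::field \<Rightarrow> 'k \<Rightarrow> 'k) f \<and> f v = 1"
proof -
  interpret p: vector_space_pair s "(*) :: 'k \<Rightarrow> 'k \<Rightarrow> 'k" using assms(1) vs_k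
    by (simp add: vector_space_pair_def)
  have i: "p.vs1.independent {v}" using assms(2) by simp
  show ?thesis
    by (rule exI[of _ "p.construct {v} (\<lambda>_. 1)"])
       (simp add: p.linear_construct[OF i] p.construct_basis[OF i])
qed

lemma sep_eq:
  assumes "vector_space s"
    and "\<And>f. Vector_Spaces.linear s ((*) :: 'k::field \<Rightarrow> 'k \<Rightarrow> 'k) f \<Longrightarrow> f x = f y"
  shows "x = y"
proof (rule ccontr)
  assume "x \<noteq> y"
  then obtain f where f: "Vector_Spaces.linear s ((*) :: 'k::field \<Rightarrow> 'k \<Rightarrow> 'k) f" "f (x - y) = 1"
    using separation[OF assms(1), of "x - y"] by auto
  interpret vector_space s by fact
  have "f (x - y) = f x - f y"
    using lin_add[OF f(1), of "x - y" y] by simp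
  then show False using f assms(2)[OF f(1)] by simp
qed

lemma basis_expansion:
  assumes vs: "vector_space s" and fin: "finite S"
  shows "\<exists>B G. finite B \<and> (\<forall>b\<in>B. Vector_Spaces.linear s ((*) :: 'k::field \<Rightarrow> 'k \<Rightarrow> 'k) (G b))
     \<and> (\<forall>w\<in>S. w = (\<Sum>b\<in>B. s (G b w) b))"
proof -
  interpret p: vector_space_pair s "(*) :: 'k \<Rightarrow> 'k \<Rightarrow> 'k" using vs vs_k
    by (simp add: vector_space_pair_def)
  interpret q: vector_space_pair s s using vs by (simp add: vector_space_pair_def)
  obtain B where B: "B \<subseteq> S" "p.vs1.independent B" "S \<subseteq> p.vs1.span B"
    by (rule p.vs1.maximal_independent_subset)
  have fB: "finite B" using B(1) fin finite_subset by blast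
  define G where "G b = p.construct B (\<lambda>x. if x = b then 1 else (0::'k))" for b
  have linG: "Vector_Spaces.linear s (*) (G b)" for b
    unfolding G_def by (rule p.linear_construct[OF B(2)])
  have Gb: "G b b' = (if b' = b then 1 else 0)" if "b' \<in> B" for b b'
    unfolding G_def using p.construct_basis[OF B(2) that] by simp
  have linR: "Vector_Spaces.linear s s (\<lambda>w. \<Sum>b\<in>B. s (G b w) b)"
    unfolding linear_iff
    using vs lin_add[OF linG] lin_scale[OF linG]
    by (simp add: p.vs1.scale_left_distrib sum.distrib p.vs1.scale_sum_right)
  have linI: "Vector_Spaces.linear s s (\<lambda>w. w)"
    using vs by (simp add: linear_iff)
  have "w = (\<Sum>b\<in>B. s (G b w) b)" if "w \<in> S" for w
  proof (rule q.linear_eq_on[OF linI linR])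
    show "w \<in> p.vs1.span B" using that B(3) by auto
    fix b' assume b': "b' \<in> B"
    have "(\<Sum>b\<in>B. s (G b b') b) = (\<Sum>b\<in>B. if b = b' then b' else 0)"
      by (rule sum.cong) (auto simp: Gb b')
    also have "\<dots> = b'" using b' fB by (simp add: sum.delta')
    finally show "b' = (\<Sum>b\<in>B. s (G b b') b)" by simp
  qed
  then show ?thesis using fB linG by (intro exI[of _ B] exI[of _ G]) blast
qed


lemma lin_zero: "Vector_Spaces.linear s ((*) :: 'k::field \<Rightarrow> 'k \<Rightarrow> 'k) f \<Longrightarrow> f 0 = 0"
  by (rule additive_zero) (simp add: lin_add)

lemma lin_sum: "Vector_Spaces.linear s ((*) :: 'k::field \<Rightarrow> 'k \<Rightarrow> 'k) f \<Longrightarrow>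
   f (sum F B) = (\<Sum>b\<in>B. f (F b))"
  by (induction B rule: infinite_finite_induct) (simp_all add: lin_zero lin_add)

lemma tens2_ev: "Vector_Spaces.linear s1 (*) f \<Longrightarrow> Vector_Spaces.linear s2 (*) g \<Longrightarrow>
   tens2 s1 s2 xs f g = (\<Sum>(v,w)\<leftarrow>xs. f v * g w)"
  by (simp add: tens2_def)

lemma tens3_ev: "Vector_Spaces.linear s1 (*) f \<Longrightarrow> Vector_Spaces.linear s2 (*) g \<Longrightarrow>
   Vector_Spaces.linear s3 (*) h \<Longrightarrow>
   tens3 s1 s2 s3 xs f g h = (\<Sum>(v,w,z)\<leftarrow>xs. f v * g w * h z)"
  by (simp add: tens3_def)

lemma tens2_eqI:
  assumes "\<And>f g. Vector_Spaces.linear s1 (*) f \<Longrightarrow> Vector_Spaces.linear s2 (*) g \<Longrightarrow>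
     (\<Sum>(v,w)\<leftarrow>xs. f v * g w) = (\<Sum>(v,w)\<leftarrow>ys. f v * g w)"
  shows "tens2 s1 s2 xs = tens2 s1 s2 ys"
  using assms by (auto simp: tens2_def fun_eq_iff)

lemma tens3_eqI:
  assumes "\<And>f g h. Vector_Spaces.linear s1 (*) f \<Longrightarrow> Vector_Spaces.linear s2 (*) g \<Longrightarrow>
     Vector_Spaces.linear s3 (*) h \<Longrightarrow>
     (\<Sum>(v,w,z)\<leftarrow>xs. f v * g w * h z) = (\<Sum>(v,w,z)\<leftarrow>ys. f v * g w * h z)"
  shows "tens3 s1 s2 s3 xs = tens3 s1 s2 s3 ys"
  using assms by (auto simp: tens3_def fun_eq_iff)

lemma core2:
  fixes s1 :: "'k::field \<Rightarrow> 'v::ab_group_add \<Rightarrow> 'v" and s2 :: "'k \<Rightarrow> 'w::ab_group_add \<Rightarrow> 'w"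
    and \<Phi> :: "'v \<Rightarrow> 'w \<Rightarrow> 'k"
  assumes vs2: "vector_space s2"
    and add1: "\<And>x y w. \<Phi> (x + y) w = \<Phi> x w + \<Phi> y w"
    and sc1: "\<And>c x w. \<Phi> (s1 c x) w = c * \<Phi> x w"
    and lin2: "\<And>v. Vector_Spaces.linear s2 (*) (\<Phi> v)"
    and H: "\<And>g. Vector_Spaces.linear s2 (*) g \<Longrightarrow>
       (\<Sum>(v,w)\<leftarrow>xs. s1 (g w) v) = (\<Sum>(v,w)\<leftarrow>ys. s1 (g w) v)"
  shows "(\<Sum>(v,w)\<leftarrow>xs. \<Phi> v w) = (\<Sum>(v,w)\<leftarrow>ys. \<Phi> v w)"
proof -
  obtain B G where B: "finite B" "\<forall>b\<in>B. Vector_Spaces.linear s2 (*) (G b)"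
    "\<forall>w\<in>set (map snd (xs @ ys)). w = (\<Sum>b\<in>B. s2 (G b w) b)"
    using basis_expansion[OF vs2, of "set (map snd (xs @ ys))"] by auto
  have expand: "\<Phi> v w = (\<Sum>b\<in>B. \<Phi> (s1 (G b w) v) b)" if "w \<in> set (map snd (xs @ ys))" for v w
  proof -
    have "\<Phi> v w = \<Phi> v (\<Sum>b\<in>B. s2 (G b w) b)" using B(3) that by auto
    also have "\<dots> = (\<Sum>b\<in>B. G b w * \<Phi> v b)"
      by (simp add: lin_sum[OF lin2] lin_scale[OF lin2])
    also have "\<dots> = (\<Sum>b\<in>B. \<Phi> (s1 (G b w) v) b)" by (simp add: sc1)
    finally show ?thesis .
  qed
  define S where "S L = (\<Sum>b\<in>B. \<Phi> (\<Sum>(v,w)\<leftarrow>L. s1 (G b w) v) b)" for L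
  have main: "(\<Sum>(v,w)\<leftarrow>L. \<Phi> v w) = S L" if "set L \<subseteq> set (xs @ ys)" for L
  proof -
    have "(\<Sum>(v,w)\<leftarrow>L. \<Phi> v w) = (\<Sum>(v,w)\<leftarrow>L. \<Sum>b\<in>B. \<Phi> (s1 (G b w) v) b)"
      by (rule arg_cong[where f=sum_list], rule map_cong[OF refl]) (use that expand in force)
    also have "\<dots> = (\<Sum>b\<in>B. \<Sum>(v,w)\<leftarrow>L. \<Phi> (s1 (G b w) v) b)"
      using sum_list_sum_swap[where F="\<lambda>p b. \<Phi> (s1 (G b (snd p)) (fst p)) b" and xs=L and B=B]
      by (simp add: case_prod_beta')
    also have "\<dots> = S L"
      unfolding S_def
      using additive_sum_list[of "\<lambda>x. \<Phi> x _" "\<lambda>p. s1 (G _ (snd p)) (fst p)" L] add1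
      by (simp add: case_prod_beta')
    finally show ?thesis .
  qed
  have "S xs = S ys" unfolding S_def using H B(2) by simp
  then show ?thesis using main[of xs] main[of ys] by simp
qed

lemma univ2:
  fixes s1 :: "'k::field \<Rightarrow> 'v::ab_group_add \<Rightarrow> 'v" and s2 :: "'k \<Rightarrow> 'w::ab_group_add \<Rightarrow> 'w"
    and \<Phi> :: "'v \<Rightarrow> 'w \<Rightarrow> 'k"
  assumes vs1: "vector_space s1" and vs2: "vector_space s2"
    and T: "tens2 s1 s2 xs = tens2 s1 s2 ys"
    and lin1: "\<And>w. Vector_Spaces.linear s1 (*) (\<lambda>v. \<Phi> v w)"
    and lin2: "\<And>v. Vector_Spaces.linear s2 (*) (\<Phi> v)"
  shows "(\<Sum>(v,w)\<leftarrow>xs. \<Phi> v w) = (\<Sum>(v,w)\<leftarrow>ys. \<Phi> v w)"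
proof (rule core2[OF vs2 _ _ lin2])
  show "\<Phi> (x + y) w = \<Phi> x w + \<Phi> y w" for x y w using lin_add[OF lin1] .
  show "\<Phi> (s1 c x) w = c * \<Phi> x w" for c x w using lin_scale[OF lin1] .
  fix g assume g: "Vector_Spaces.linear s2 (*) g"
  show "(\<Sum>(v,w)\<leftarrow>xs. s1 (g w) v) = (\<Sum>(v,w)\<leftarrow>ys. s1 (g w) v)"
  proof (rule sep_eq[OF vs1])
    fix f :: "'v \<Rightarrow> 'k" assume f: "Vector_Spaces.linear s1 (*) f"
    have e: "f (\<Sum>(v,w)\<leftarrow>L. s1 (g w) v) = tens2 s1 s2 L f g" for L
      by (simp add: lin_sum_list[OF f] tens2_ev[OF f g] lin_scale[OF f] case_prod_beta' mult.commute)
    show "f (\<Sum>(v,w)\<leftarrow>xs. s1 (g w) v) = f (\<Sum>(v,w)\<leftarrow>ys. s1 (g w) v)"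
      by (simp only: e T)
  qed
qed

lemma univ3:
  fixes s1 :: "'k::field \<Rightarrow> 'v::ab_group_add \<Rightarrow> 'v" and s2 :: "'k \<Rightarrow> 'w::ab_group_add \<Rightarrow> 'w"
    and s3 :: "'k \<Rightarrow> 'z::ab_group_add \<Rightarrow> 'z"
    and \<Phi> :: "'v \<Rightarrow> 'w \<Rightarrow> 'z \<Rightarrow> 'k"
  assumes vs1: "vector_space s1" and vs2: "vector_space s2" and vs3: "vector_space s3"
    and T: "tens3 s1 s2 s3 xs = tens3 s1 s2 s3 ys"
    and lin1: "\<And>w z. Vector_Spaces.linear s1 (*) (\<lambda>v. \<Phi> v w z)"
    and lin2: "\<And>v z. Vector_Spaces.linear s2 (*) (\<lambda>w. \<Phi> v w z)"
    and lin3: "\<And>v w. Vector_Spaces.linear s3 (*) (\<Phi> v w)"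
  shows "(\<Sum>(v,w,z)\<leftarrow>xs. \<Phi> v w z) = (\<Sum>(v,w,z)\<leftarrow>ys. \<Phi> v w z)"
proof -
  obtain B G where B: "finite B" "\<forall>b\<in>B. Vector_Spaces.linear s3 (*) (G b)"
    "\<forall>z\<in>set (map (snd \<circ> snd) (xs @ ys)). z = (\<Sum>b\<in>B. s3 (G b z) b)"
    using basis_expansion[OF vs3, of "set (map (snd \<circ> snd) (xs @ ys))"] by auto
  define Lb where "Lb b (L :: ('v \<times> 'w \<times> 'z) list) = map (\<lambda>(v,w,z). (v, s2 (G b z) w)) L" for b L
  have expand: "\<Phi> v w z = (\<Sum>b\<in>B. \<Phi> v (s2 (G b z) w) b)" if "z \<in> set (map (snd \<circ> snd) (xs @ ys))" for v w z
  proof -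
    have "\<Phi> v w z = \<Phi> v w (\<Sum>b\<in>B. s3 (G b z) b)" using B(3) that by auto
    also have "\<dots> = (\<Sum>b\<in>B. G b z * \<Phi> v w b)"
      by (simp add: lin_sum[OF lin3] lin_scale[OF lin3])
    also have "\<dots> = (\<Sum>b\<in>B. \<Phi> v (s2 (G b z) w) b)" by (simp add: lin_scale[OF lin2])
    finally show ?thesis .
  qed
  have main: "(\<Sum>(v,w,z)\<leftarrow>L. \<Phi> v w z) = (\<Sum>b\<in>B. \<Sum>(v,w)\<leftarrow>Lb b L. \<Phi> v w b)"
    if "set L \<subseteq> set (xs @ ys)" for L
  proof -
    have "(\<Sum>(v,w,z)\<leftarrow>L. \<Phi> v w z) = (\<Sum>(v,w,z)\<leftarrow>L. \<Sum>b\<in>B. \<Phi> v (s2 (G b z) w) b)"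
      by (rule arg_cong[where f=sum_list], rule map_cong[OF refl]) (use that expand in force)
    also have "\<dots> = (\<Sum>b\<in>B. \<Sum>(v,w,z)\<leftarrow>L. \<Phi> v (s2 (G b z) w) b)"
      using sum_list_sum_swap[where F="\<lambda>p b. \<Phi> (fst p) (s2 (G b (snd (snd p))) (fst (snd p))) b" and xs=L and B=B]
      by (simp add: case_prod_beta')
    also have "\<dots> = (\<Sum>b\<in>B. \<Sum>(v,w)\<leftarrow>Lb b L. \<Phi> v w b)"
      unfolding Lb_def by (simp add: case_prod_beta' comp_def)
    finally show ?thesis .
  qed
  have "(\<Sum>(v,w)\<leftarrow>Lb b xs. \<Phi> v w b) = (\<Sum>(v,w)\<leftarrow>Lb b ys. \<Phi> v w b)" if b: "b \<in> B" for b
  proof (rule univ2[OF vs1 vs2 _ lin1 lin2])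
    have Gb: "Vector_Spaces.linear s3 (*) (G b)" using B(2) b by auto
    show "tens2 s1 s2 (Lb b xs) = tens2 s1 s2 (Lb b ys)"
    proof (rule tens2_eqI)
      fix f g assume f: "Vector_Spaces.linear s1 (*) f" and g: "Vector_Spaces.linear s2 (*) g"
      have e: "(\<Sum>(v,w)\<leftarrow>Lb b L. f v * g w) = tens3 s1 s2 s3 L f g (G b)" for L
        unfolding Lb_def
        by (simp add: tens3_ev[OF f g Gb] lin_scale[OF g] case_prod_beta' comp_def algebra_simps)
      show "(\<Sum>(v,w)\<leftarrow>Lb b xs. f v * g w) = (\<Sum>(v,w)\<leftarrow>Lb b ys. f v * g w)"
        by (simp only: e T)
    qed
  qed
  then show ?thesis using main[of xs] main[of ys] by simp
qed



lemma sum_list_concat_map: "sum_list (map F (concat xss)) = (\<Sum>xs\<leftarrow>xss. sum_list (map F xs))"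
  by (induction xss) auto

lemma sum_list_concat': "sum_list (concat xss) = (\<Sum>xs\<leftarrow>xss. sum_list xs)"
  by (induction xss) auto

lemma fun2_sum_list_apply: "(\<Sum>x\<leftarrow>xs. F x) f g = (\<Sum>x\<leftarrow>xs. (F x f g :: 'k::comm_monoid_add))"
  by (induction xs) auto

lemma lin_comp: "Vector_Spaces.linear s s' p \<Longrightarrow> Vector_Spaces.linear s' ((*) :: 'k::field \<Rightarrow> 'k \<Rightarrow> 'k) f
   \<Longrightarrow> Vector_Spaces.linear s (*) (\<lambda>x. f (p x))"
  using Vector_Spaces.linear_compose[of s s' p "(*)" f] by (simp add: comp_def)

lemma rep2_ok: "set (map fst L) \<subseteq> M \<Longrightarrow>
  set (map fst (rep2 s1 s2 M (tens2 s1 s2 L))) \<subseteq> M \<and> tens2 s1 s2 (rep2 s1 s2 M (tens2 s1 s2 L)) = tens2 s1 s2 L"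
  unfolding rep2_def by (rule someI[where x=L]) simp

lemma rep2U: "tens2 s1 s2 (rep2 s1 s2 UNIV (tens2 s1 s2 L)) = tens2 s1 s2 L"
  using rep2_ok[of L UNIV] by simp

lemma rep3_ok: "tens3 s1 s2 s3 (rep3 s1 s2 s3 (tens3 s1 s2 s3 L)) = tens3 s1 s2 s3 L"
  unfolding rep3_def by (rule someI[where x=L]) simp

lemma tens2_append: "tens2 s1 s2 (xs @ ys) = tens2 s1 s2 xs + tens2 s1 s2 ys"
  by (auto simp: tens2_def fun_eq_iff)
lemma tens2_Nil: "tens2 s1 s2 [] = 0"
  by (auto simp: tens2_def fun_eq_iff)
lemma tens2_sum_list: "(\<Sum>x\<leftarrow>xs. tens2 s1 s2 (F x)) = tens2 s1 s2 (concat (map F xs))"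
  by (induction xs) (simp_all add: tens2_Nil tens2_append)

lemma tens2_sum_repl:
  assumes "tens2 s1 s2 R = tens2 s1 s2 L" "Vector_Spaces.linear s1 (*) f" "Vector_Spaces.linear s2 (*) g"
  shows "(\<Sum>x\<leftarrow>R. f (fst x) * g (snd x)) = (\<Sum>x\<leftarrow>L. f (fst x) * g (snd x))"
  using tens2_ev[OF assms(2,3), of R] tens2_ev[OF assms(2,3), of L] assms(1)
  by (simp add: case_prod_unfold)

lemma sum2_repl:
  assumes "tens2 s1 s2 R = tens2 s1 s2 L" "\<And>y. Vector_Spaces.linear s1 (*) (\<lambda>a. F a y)"
    "\<And>y. Vector_Spaces.linear s2 (*) (\<lambda>b. G b y)"
  shows "(\<Sum>x\<leftarrow>R. \<Sum>y\<leftarrow>Y. F (fst x) y * G (snd x) y) = (\<Sum>x\<leftarrow>L. \<Sum>y\<leftarrow>Y. F (fst x) y * G (snd x) y)"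
  apply (subst (1 2) sum_list_swap)
  apply (rule arg_cong[where f=sum_list], rule map_cong[OF refl])
  apply (rule tens2_sum_repl[OF assms(1)])
  using assms(2,3) by auto

context
  fixes sA :: "'k::field \<Rightarrow> 'a::ab_group_add \<Rightarrow> 'a" and mA :: "'a \<Rightarrow> 'a \<Rightarrow> 'a"
    and sB :: "'k \<Rightarrow> 'b::ab_group_add \<Rightarrow> 'b" and mB :: "'b \<Rightarrow> 'b \<Rightarrow> 'b"
  assumes lA: "\<And>a. Vector_Spaces.linear sA sA (mA a)" and rA: "\<And>b. Vector_Spaces.linear sA sA (\<lambda>a. mA a b)"
    and lB: "\<And>a. Vector_Spaces.linear sB sB (mB a)" and rB: "\<And>b. Vector_Spaces.linear sB sB (\<lambda>a. mB a b)"
begin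

lemma ab_mult_tens:
  "ab_mult sA sB mA mB (tens2 sA sB L) (tens2 sA sB L') =
   tens2 sA sB [(mA a a', mB b b'). (a, b) \<leftarrow> L, (a', b') \<leftarrow> L']"
proof -
  let ?R = "rep2 sA sB UNIV (tens2 sA sB L)" and ?R' = "rep2 sA sB UNIV (tens2 sA sB L')"
  show ?thesis unfolding ab_mult_def
  proof (rule tens2_eqI)
    fix f g assume f: "Vector_Spaces.linear sA (*) f" and g: "Vector_Spaces.linear sB (*) g"
    show "(\<Sum>(v,w)\<leftarrow>[(mA a a', mB b b'). (a, b) \<leftarrow> ?R, (a', b') \<leftarrow> ?R']. f v * g w) =
          (\<Sum>(v,w)\<leftarrow>[(mA a a', mB b b'). (a, b) \<leftarrow> L, (a', b') \<leftarrow> L']. f v * g w)"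
      apply (simp add: sum_list_concat_map comp_def case_prod_unfold)
      apply (subst sum2_repl[OF rep2U])
        apply (rule lin_comp[OF rA f])
       apply (rule lin_comp[OF rB g])
      apply (rule arg_cong[where f=sum_list], rule map_cong[OF refl])
      apply (rule tens2_sum_repl[OF rep2U])
       apply (rule lin_comp[OF lA f])
      apply (rule lin_comp[OF lB g])
      done
  qed
qed

end

context
  fixes sH :: "'k::field \<Rightarrow> 'h::ring_1 \<Rightarrow> 'h"
    and D :: "'h \<Rightarrow> ('h \<times> 'h) list" and e :: "'h \<Rightarrow> 'k"
    and Phi Phii :: "('h \<times> 'h \<times> 'h) list"
    and sA :: "'k \<Rightarrow> 'a::ab_group_add \<Rightarrow> 'a" and mA :: "'a \<Rightarrow> 'a \<Rightarrow> 'a" and oneA :: 'a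
    and actA :: "'h \<Rightarrow> 'a \<Rightarrow> 'a"
    and sB :: "'k \<Rightarrow> 'b::ab_group_add \<Rightarrow> 'b" and mB :: "'b \<Rightarrow> 'b \<Rightarrow> 'b" and oneB :: 'b
    and actB :: "'b \<Rightarrow> 'h \<Rightarrow> 'b"
  assumes A: "lmod_alg sH D e Phi sA mA oneA actA"
    and B: "rmod_alg sH D e Phii sB mB oneB actB"
begin

lemma vsA: "vector_space sA" using A unfolding lmod_alg_def by blast
lemma lA: "Vector_Spaces.linear sA sA (mA a)" using A unfolding lmod_alg_def by blast
lemma rA: "Vector_Spaces.linear sA sA (\<lambda>x. mA x b)" using A unfolding lmod_alg_def by blast
lemma hA: "Vector_Spaces.linear sH sA (\<lambda>h. actA h a)" using A unfolding lmod_alg_def by blast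
lemma aA: "Vector_Spaces.linear sA sA (actA h)" using A unfolding lmod_alg_def by blast
lemma oneactA: "actA 1 a = a" using A unfolding lmod_alg_def by blast
lemma mulactA: "actA (h * g) a = actA h (actA g a)" using A unfolding lmod_alg_def by blast
lemma unitA: "mA oneA a = a" "mA a oneA = a" using A unfolding lmod_alg_def by blast+
lemma assocA: "mA (mA a a') a'' = (\<Sum>(x, y, z)\<leftarrow>Phi. mA (actA x a) (mA (actA y a') (actA z a'')))"
  using A unfolding lmod_alg_def by blast
lemma actmA: "actA h (mA a a') = (\<Sum>(h1, h2)\<leftarrow>D h. mA (actA h1 a) (actA h2 a'))"
  using A unfolding lmod_alg_def by blast
lemma actoneA: "actA h oneA = sA (e h) oneA" using A unfolding lmod_alg_def by blast

lemma vsB: "vector_space sB" using B unfolding rmod_alg_def by blast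
lemma lB: "Vector_Spaces.linear sB sB (mB a)" using B unfolding rmod_alg_def by blast
lemma rB: "Vector_Spaces.linear sB sB (\<lambda>x. mB x b)" using B unfolding rmod_alg_def by blast
lemma hB: "Vector_Spaces.linear sH sB (\<lambda>h. actB b h)" using B unfolding rmod_alg_def by blast
lemma aB: "Vector_Spaces.linear sB sB (\<lambda>b. actB b h)" using B unfolding rmod_alg_def by blast
lemma oneactB: "actB b 1 = b" using B unfolding rmod_alg_def by blast
lemma mulactB: "actB b (h * g) = actB (actB b h) g" using B unfolding rmod_alg_def by blast
lemma unitB: "mB oneB b = b" "mB b oneB = b" using B unfolding rmod_alg_def by blast+
lemma assocB: "mB (mB b b') b'' = (\<Sum>(x, y, z)\<leftarrow>Phii. mB (actB b x) (mB (actB b' y) (actB b'' z)))"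
  using B unfolding rmod_alg_def by blast
lemma actmB: "actB (mB b b') h = (\<Sum>(h1, h2)\<leftarrow>D h. mB (actB b h1) (actB b' h2))"
  using B unfolding rmod_alg_def by blast
lemma actoneB: "actB oneB h = sB (e h) oneB" using B unfolding rmod_alg_def by blast

lemma lin_parts:
  "mA a (x + y) = mA a x + mA a y" "mA a (sA c x) = sA c (mA a x)"
  "mA (x + y) a = mA x a + mA y a" "mA (sA c x) a = sA c (mA x a)"
  "actA (h + g) a = actA h a + actA g a" "actA (sH c h) a = sA c (actA h a)"
  "actA h (x + y) = actA h x + actA h y" "actA h (sA c x) = sA c (actA h x)"
  "mB b (u + v) = mB b u + mB b v" "mB b (sB c u) = sB c (mB b u)"
  "mB (u + v) b = mB u b + mB v b" "mB (sB c u) b = sB c (mB u b)"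
  "actB b (h + g) = actB b h + actB b g" "actB b (sH c h) = sB c (actB b h)"
  "actB (u + v) h = actB u h + actB v h" "actB (sB c u) h = sB c (actB u h)"
  using lA[of a] rA[of a] hA[of a] aA[of h] lB[of b] rB[of b] hB[of b] aB[of h]
  by (simp_all add: linear_iff)

lemma ab_mult_tens':
  "ab_mult sA sB mA mB (tens2 sA sB L) (tens2 sA sB L') =
   tens2 sA sB [(mA a a', mB b b'). (a, b) \<leftarrow> L, (a', b') \<leftarrow> L']"
  by (rule ab_mult_tens[OF lA rA lB rB])

lemma ab_lact_tens:
  "ab_lact sA sB actA h (tens2 sA sB L) = tens2 sA sB [(actA h a, b). (a, b) \<leftarrow> L]"
  unfolding ab_lact_def
proof (rule tens2_eqI)
  fix f g assume f: "Vector_Spaces.linear sA (*) f" and g: "Vector_Spaces.linear sB (*) g"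
  show "(\<Sum>(v,w)\<leftarrow>[(actA h a, b). (a, b) \<leftarrow> rep2 sA sB UNIV (tens2 sA sB L)]. f v * g w) =
        (\<Sum>(v,w)\<leftarrow>[(actA h a, b). (a, b) \<leftarrow> L]. f v * g w)"
    apply (simp add: comp_def case_prod_unfold)
    apply (rule tens2_sum_repl[OF rep2U lin_comp[OF aA f] g])
    done
qed

lemma ab_ract_tens:
  "ab_ract sA sB actB (tens2 sA sB L) h = tens2 sA sB [(a, actB b h). (a, b) \<leftarrow> L]"
  unfolding ab_ract_def
proof (rule tens2_eqI)
  fix f g assume f: "Vector_Spaces.linear sA (*) f" and g: "Vector_Spaces.linear sB (*) g"
  show "(\<Sum>(v,w)\<leftarrow>[(a, actB b h). (a, b) \<leftarrow> rep2 sA sB UNIV (tens2 sA sB L)]. f v * g w) =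
        (\<Sum>(v,w)\<leftarrow>[(a, actB b h). (a, b) \<leftarrow> L]. f v * g w)"
    apply (simp add: comp_def case_prod_unfold)
    apply (rule tens2_sum_repl[OF rep2U f lin_comp[OF aB g]])
    done
qed

lemma sc2_tens: "sc2 c (tens2 sA sB L) = tens2 sA sB [(sA c a, b). (a, b) \<leftarrow> L]"
proof -
  have "sc2 c (tens2 sA sB L) f g = tens2 sA sB [(sA c a, b). (a, b) \<leftarrow> L] f g" for f g
    by (cases "Vector_Spaces.linear sA (*) f \<and> Vector_Spaces.linear sB (*) g")
       (auto simp: sc2_def tens2_def comp_def case_prod_unfold lin_scale sum_list_const_mult[symmetric]
         mult.assoc)
  then show ?thesis by (auto simp: fun_eq_iff)
qed


lemma vs_sc2: "vector_space (sc2 :: 'k \<Rightarrow> ('x \<Rightarrow> 'y \<Rightarrow> 'k) \<Rightarrow> ('x \<Rightarrow> 'y \<Rightarrow> 'k))"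
  by unfold_locales (simp_all add: sc2_def fun_eq_iff algebra_simps)

abbreviation "MM \<equiv> range (tens2 sA sB)"

lemma part1: "bimod_alg sH D e Phi Phii sc2 (ab_carrier sA sB) (ab_mult sA sB mA mB)
           (ab_one sA sB oneA oneB) (ab_lact sA sB actA) (ab_ract sA sB actB)"
proof -
  note ops = ab_mult_tens' ab_lact_tens ab_ract_tens sc2_tens ab_one_def tens2_append[symmetric]
  have c1: "vector_space (sc2 :: 'k \<Rightarrow> (('a \<Rightarrow> 'k) \<Rightarrow> ('b \<Rightarrow> 'k) \<Rightarrow> 'k) \<Rightarrow> _)" by (rule vs_sc2)
  have c2: "0 \<in> MM" using tens2_Nil by (metis rangeI)
  have c3: "\<forall>x\<in>MM. \<forall>y\<in>MM. x + y \<in> MM" by (auto simp: ops)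
  have c4: "\<forall>c. \<forall>x\<in>MM. sc2 c x \<in> MM" by (auto simp: ops)
  have c5: "ab_one sA sB oneA oneB \<in> MM" by (auto simp: ops)
  have c6: "\<forall>x\<in>MM. \<forall>y\<in>MM. ab_mult sA sB mA mB x y \<in> MM" by (auto simp: ops)
  have c7: "\<forall>h. \<forall>x\<in>MM. ab_lact sA sB actA h x \<in> MM \<and> ab_ract sA sB actB x h \<in> MM" by (auto simp: ops)
  have c8: "\<forall>x\<in>MM. \<forall>y\<in>MM. \<forall>z\<in>MM. ab_mult sA sB mA mB (x + y) z = ab_mult sA sB mA mB x z + ab_mult sA sB mA mB y z
     \<and> ab_mult sA sB mA mB z (x + y) = ab_mult sA sB mA mB z x + ab_mult sA sB mA mB z y"
    by (auto simp: ops) (rule tens2_eqI, simp add: sum_list_concat_map comp_def case_prod_unfold sum_list_addf)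
  have c9: "\<forall>c. \<forall>x\<in>MM. \<forall>y\<in>MM. ab_mult sA sB mA mB (sc2 c x) y = sc2 c (ab_mult sA sB mA mB x y)
     \<and> ab_mult sA sB mA mB x (sc2 c y) = sc2 c (ab_mult sA sB mA mB x y)"
    by (auto simp: ops lin_parts comp_def case_prod_unfold map_concat)
  note evs = sum_list_concat' sum_list_concat_map comp_def case_prod_unfold sum_list_addf map_concat lin_add lin_scale
  have c10: "\<forall>h g. \<forall>x\<in>MM. ab_lact sA sB actA (h + g) x = ab_lact sA sB actA h x + ab_lact sA sB actA g x
      \<and> ab_ract sA sB actB x (h + g) = ab_ract sA sB actB x h + ab_ract sA sB actB x g"
    by (auto simp: ops lin_parts) (rule tens2_eqI, simp add: evs algebra_simps)+
  have c11: "\<forall>c h. \<forall>x\<in>MM. ab_lact sA sB actA (sH c h) x = sc2 c (ab_lact sA sB actA h x)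
      \<and> ab_ract sA sB actB x (sH c h) = sc2 c (ab_ract sA sB actB x h)"
    by (auto simp: ops lin_parts comp_def case_prod_unfold map_concat)
       (rule tens2_eqI, simp add: evs algebra_simps)
  have c12: "\<forall>h. \<forall>x\<in>MM. \<forall>y\<in>MM. ab_lact sA sB actA h (x + y) = ab_lact sA sB actA h x + ab_lact sA sB actA h y
      \<and> ab_ract sA sB actB (x + y) h = ab_ract sA sB actB x h + ab_ract sA sB actB y h"
    by (auto simp: ops)
  have c13: "\<forall>c h. \<forall>x\<in>MM. ab_lact sA sB actA h (sc2 c x) = sc2 c (ab_lact sA sB actA h x)
      \<and> ab_ract sA sB actB (sc2 c x) h = sc2 c (ab_ract sA sB actB x h)"
    by (auto simp: ops lin_parts comp_def case_prod_unfold map_concat)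
  have c14: "\<forall>x\<in>MM. ab_lact sA sB actA 1 x = x \<and> ab_ract sA sB actB x 1 = x"
    by (auto simp: ops oneactA oneactB comp_def case_prod_unfold)
  have c15: "\<forall>h g. \<forall>x\<in>MM. ab_lact sA sB actA (h * g) x = ab_lact sA sB actA h (ab_lact sA sB actA g x)
      \<and> ab_ract sA sB actB x (h * g) = ab_ract sA sB actB (ab_ract sA sB actB x h) g
      \<and> ab_lact sA sB actA h (ab_ract sA sB actB x g) = ab_ract sA sB actB (ab_lact sA sB actA h x) g"
    by (auto simp: ops mulactA mulactB comp_def case_prod_unfold)
  have c16: "\<forall>x\<in>MM. ab_mult sA sB mA mB (ab_one sA sB oneA oneB) x = x
      \<and> ab_mult sA sB mA mB x (ab_one sA sB oneA oneB) = x"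
    by (auto simp: ops unitA unitB comp_def case_prod_unfold)
  have c17: "\<forall>h. ab_lact sA sB actA h (ab_one sA sB oneA oneB) = sc2 (e h) (ab_one sA sB oneA oneB)
      \<and> ab_ract sA sB actB (ab_one sA sB oneA oneB) h = sc2 (e h) (ab_one sA sB oneA oneB)"
    by (auto simp: ops actoneA actoneB) (rule tens2_eqI, simp add: evs algebra_simps)
  have c19: "\<forall>h. \<forall>x\<in>MM. \<forall>y\<in>MM.
     ab_lact sA sB actA h (ab_mult sA sB mA mB x y) = (\<Sum>(h1, h2)\<leftarrow>D h. ab_mult sA sB mA mB (ab_lact sA sB actA h1 x) (ab_lact sA sB actA h2 y))
   \<and> ab_ract sA sB actB (ab_mult sA sB mA mB x y) h = (\<Sum>(h1, h2)\<leftarrow>D h. ab_mult sA sB mA mB (ab_ract sA sB actB x h1) (ab_ract sA sB actB y h2))"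
    apply (auto simp: ops case_prod_unfold tens2_sum_list)
     apply (rule tens2_eqI, simp add: evs actmA lin_sum_list sum_list_mult_const[symmetric] sum_list_const_mult[symmetric])
     apply (simp only: sum_list_swap[where xs="D _"])
    apply (rule tens2_eqI, simp add: evs actmB lin_sum_list sum_list_mult_const[symmetric] sum_list_const_mult[symmetric])
     apply (simp only: sum_list_swap[where xs="D _"])
    done
  have c18: "\<forall>x\<in>MM. \<forall>y\<in>MM. \<forall>z\<in>MM. ab_mult sA sB mA mB (ab_mult sA sB mA mB x y) z =
        (\<Sum>(X1, X2, X3)\<leftarrow>Phi. \<Sum>(x1, x2, x3)\<leftarrow>Phii.
           ab_mult sA sB mA mB (ab_lact sA sB actA X1 (ab_ract sA sB actB x x1))
             (ab_mult sA sB mA mB (ab_lact sA sB actA X2 (ab_ract sA sB actB y x2))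
               (ab_lact sA sB actA X3 (ab_ract sA sB actB z x3))))"
    apply (auto simp: ops case_prod_unfold tens2_sum_list)
    apply (rule tens2_eqI, simp add: evs assocA assocB lin_sum_list sum_list_mult_const[symmetric] sum_list_const_mult[symmetric])
    apply (simp only: sum_list_swap[where xs="Phii"])
    apply (simp only: sum_list_swap[where xs="Phi"])
    done
  show ?thesis unfolding bimod_alg_def ab_carrier_def
    by (intro conjI c1 c2 c3 c4 c5 c6 c7 c8 c9 c10 c11 c12 c13 c14 c15 c16 c17 c18 c19)
qed

end


lemma sc2_tens_snd: "sc2 c (tens2 s1 s2 L) = tens2 s1 s2 [(v, s2 c w). (v, w) \<leftarrow> L]"
proof -
  have "sc2 c (tens2 s1 s2 L) f g = tens2 s1 s2 [(v, s2 c w). (v, w) \<leftarrow> L] f g" for f g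
    by (cases "Vector_Spaces.linear s1 (*) f \<and> Vector_Spaces.linear s2 (*) g")
       (auto simp: sc2_def tens2_def comp_def case_prod_unfold lin_scale sum_list_const_mult[symmetric]
         mult.assoc mult.left_commute)
  then show ?thesis by (auto simp: fun_eq_iff)
qed

lemma lin_sum_listI: "vector_space s \<Longrightarrow> (\<And>x. Vector_Spaces.linear s ((*) :: 'k::field \<Rightarrow> 'k \<Rightarrow> 'k) (F x))
  \<Longrightarrow> Vector_Spaces.linear s (*) (\<lambda>v. \<Sum>x\<leftarrow>xs. F x v)"
  by (simp add: lin_iff sum_list_addf sum_list_const_mult)

lemma hom_lin:
  fixes s :: "'k::field \<Rightarrow> 'u::ab_group_add \<Rightarrow> 'u"
    and s1 :: "'k \<Rightarrow> 'v::ab_group_add \<Rightarrow> 'v" and s2 :: "'k \<Rightarrow> 'w::ab_group_add \<Rightarrow> 'w"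
    and F :: "'u \<Rightarrow> ('v \<times> 'w) list" and \<Xi> :: "'v \<times> 'w \<Rightarrow> 'k"
  assumes vs: "vector_space s" and vs1: "vector_space s1" and vs2: "vector_space s2"
    and add: "\<And>x y. tens2 s1 s2 (F (x + y)) = tens2 s1 s2 (F x @ F y)"
    and sc: "\<And>c x. tens2 s1 s2 (F (s c x)) = sc2 c (tens2 s1 s2 (F x))"
    and l1: "\<And>w. Vector_Spaces.linear s1 (*) (\<lambda>v. \<Xi> (v, w))"
    and l2: "\<And>v. Vector_Spaces.linear s2 (*) (\<lambda>w. \<Xi> (v, w))"
  shows "Vector_Spaces.linear s (*) (\<lambda>u. \<Sum>q\<leftarrow>F u. \<Xi> q)"
proof -
  have U: "(\<Sum>q\<leftarrow>xs. \<Xi> q) = (\<Sum>q\<leftarrow>ys. \<Xi> q)"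
    if "tens2 s1 s2 xs = tens2 s1 s2 ys" for xs ys
    using univ2[OF vs1 vs2 that l1 l2] by simp
  show ?thesis unfolding lin_iff
  proof (intro conjI allI)
    show "vector_space s" by fact
    fix x y
    show "(\<Sum>q\<leftarrow>F (x + y). \<Xi> q) = (\<Sum>q\<leftarrow>F x. \<Xi> q) + (\<Sum>q\<leftarrow>F y. \<Xi> q)"
      using U[OF add[of x y]] by simp
  next
    fix c x
    have "tens2 s1 s2 (F (s c x)) = tens2 s1 s2 [(v, s2 c w). (v, w) \<leftarrow> F x]"
      by (simp add: sc sc2_tens_snd)
    from U[OF this] show "(\<Sum>q\<leftarrow>F (s c x). \<Xi> q) = c * (\<Sum>q\<leftarrow>F x. \<Xi> q)"
      by (simp add: comp_def case_prod_unfold lin_scale[OF l2] sum_list_const_mult)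
  qed
qed

lemma kalg_vs: "kalg s \<Longrightarrow> vector_space s" by (simp add: kalg_def)
lemma kalg_l: assumes "kalg s" shows "x * s c y = s c (x * y)"
proof -
  have "s c (x * y) = x * s c y" using assms unfolding kalg_def by blast
  then show ?thesis by (rule sym)
qed
lemma kalg_r: assumes "kalg s" shows "s c x * y = s c (x * y)"
proof -
  have "s c (x * y) = s c x * y" using assms unfolding kalg_def by blast
  then show ?thesis by (rule sym)
qed


context
  fixes sH :: "'k::field \<Rightarrow> 'h::ring_1 \<Rightarrow> 'h"
    and D :: "'h \<Rightarrow> ('h \<times> 'h) list" and e :: "'h \<Rightarrow> 'k"
    and Phi Phii :: "('h \<times> 'h \<times> 'h) list"
    and sA :: "'k \<Rightarrow> 'a::ab_group_add \<Rightarrow> 'a" and mA :: "'a \<Rightarrow> 'a \<Rightarrow> 'a" and oneA :: 'a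
    and actA :: "'h \<Rightarrow> 'a \<Rightarrow> 'a"
    and sB :: "'k \<Rightarrow> 'b::ab_group_add \<Rightarrow> 'b" and mB :: "'b \<Rightarrow> 'b \<Rightarrow> 'b" and oneB :: 'b
    and actB :: "'b \<Rightarrow> 'h \<Rightarrow> 'b"
    and sU :: "'k \<Rightarrow> 'u::ring_1 \<Rightarrow> 'u"
    and lam :: "'u \<Rightarrow> ('h \<times> 'u) list" and rho :: "'u \<Rightarrow> ('u \<times> 'h) list"
    and Phil Phili :: "('h \<times> 'h \<times> 'u) list"
    and Phir Phiri :: "('u \<times> 'h \<times> 'h) list"
    and Philr Philri :: "('h \<times> 'u \<times> 'h) list"
  assumes H: "qbialg sH D e Phi Phii"
    and A: "lmod_alg sH D e Phi sA mA oneA actA"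
    and B: "rmod_alg sH D e Phii sB mB oneB actB"
    and U: "bicomod_alg sH D e Phi sU lam rho Phil Phili Phir Phiri Philr Philri"
begin

lemma kH: "kalg sH" using H unfolding qbialg_def by blast
lemma kU: "kalg sU" using U unfolding bicomod_alg_def lcomod_alg_def by blast
lemma lamhom: "alg_hom2 sU sH sU lam" using U unfolding bicomod_alg_def lcomod_alg_def by blast
lemma rhohom: "alg_hom2 sU sU sH rho" using U unfolding bicomod_alg_def rcomod_alg_def by blast
lemma vsH: "vector_space sH" by (rule kalg_vs[OF kH])
lemma vsU: "vector_space sU" by (rule kalg_vs[OF kU])
lemmas vsA' = vsA[OF A B] and vsB' = vsB[OF A B] and lp = lin_parts[OF A B]
lemmas kHl = kalg_l[OF kH] and kHr = kalg_r[OF kH] and kUl = kalg_l[OF kU] and kUr = kalg_r[OF kU]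

definition "Psi f g h p q = (\<Sum>(a,u,b)\<leftarrow>ts_pure mA actA mB actB lam rho Phili Phiri Philri p q. f a * g u * h b)"

lemmas evs = sum_list_concat' sum_list_concat_map comp_def case_prod_unfold sum_list_addf map_concat

context
  fixes f :: "'a \<Rightarrow> 'k" and g :: "'u \<Rightarrow> 'k" and h :: "'b \<Rightarrow> 'k"
  assumes f: "Vector_Spaces.linear sA (*) f" and g: "Vector_Spaces.linear sU (*) g"
    and h: "Vector_Spaces.linear sB (*) h"
begin

lemma PsiA: "Vector_Spaces.linear sA (*) (\<lambda>a. Psi f g h (a, u, b) q)"
  unfolding lin_iff Psi_def ts_pure_def
  by (cases q) (simp add: vsA' evs lp lin_add[OF f] lin_scale[OF f] distrib_right mult.assoc sum_list_const_mult)

lemma PsiU: "Vector_Spaces.linear sU (*) (\<lambda>u. Psi f g h (a, u, b) q)"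
  unfolding Psi_def ts_pure_def
  apply (cases q)
  apply (simp add: evs)
  apply (rule lin_sum_listI[OF vsU])
  apply (rule hom_lin[OF vsU vsH vsU])
  using lamhom unfolding alg_hom2_def apply blast
  using lamhom unfolding alg_hom2_def apply blast
  unfolding lin_iff
   apply (simp add: vsH evs lp lin_add[OF f] lin_scale[OF f] ring_distribs kHl kHr mult.assoc sum_list_const_mult)
  apply (simp add: vsU evs lp lin_add[OF g] lin_scale[OF g] ring_distribs kUl kUr mult.assoc sum_list_const_mult mult.left_commute[of _ "_::'k"])
  done

lemma PsiB: "Vector_Spaces.linear sB (*) (\<lambda>b. Psi f g h (a, u, b) q)"
  unfolding lin_iff Psi_def ts_pure_def
  by (cases q) (simp add: vsB' evs lp lin_add[OF h] lin_scale[OF h] distrib_left mult.assoc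
     sum_list_const_mult mult.left_commute[of _ "_::'k"])

lemma PsiA2: "Vector_Spaces.linear sA (*) (\<lambda>a'. Psi f g h p (a', u', b'))"
  unfolding lin_iff Psi_def ts_pure_def
  by (cases p) (simp add: vsA' evs lp lin_add[OF f] lin_scale[OF f] distrib_right mult.assoc sum_list_const_mult)

lemma PsiB2: "Vector_Spaces.linear sB (*) (\<lambda>b'. Psi f g h p (a', u', b'))"
  unfolding lin_iff Psi_def ts_pure_def
  by (cases p) (simp add: vsB' evs lp lin_add[OF h] lin_scale[OF h] distrib_left mult.assoc
     sum_list_const_mult mult.left_commute[of _ "_::'k"])

lemma PsiU2: "Vector_Spaces.linear sU (*) (\<lambda>u'. Psi f g h p (a', u', b'))"
  unfolding Psi_def ts_pure_def
  apply (cases p)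
  apply (simp add: evs)
  apply (rule lin_sum_listI[OF vsU])+
  apply (rule hom_lin[OF vsU vsU vsH])
  using rhohom unfolding alg_hom2_def apply blast
  using rhohom unfolding alg_hom2_def apply blast
  unfolding lin_iff
   apply (simp add: vsU evs lp lin_add[OF g] lin_scale[OF g] ring_distribs kUl kUr mult.assoc sum_list_const_mult mult.left_commute[of _ "_::'k"])
  apply (simp add: vsH evs lp lin_add[OF h] lin_scale[OF h] ring_distribs kHl kHr mult.assoc sum_list_const_mult mult.left_commute[of _ "_::'k"])
  done

lemma Psi_repl:
  assumes P: "tens3 sA sU sB P = tens3 sA sU sB P'" and Q: "tens3 sA sU sB Q = tens3 sA sU sB Q'"
  shows "(\<Sum>p\<leftarrow>P. \<Sum>q\<leftarrow>Q. Psi f g h p q) = (\<Sum>p\<leftarrow>P'. \<Sum>q\<leftarrow>Q'. Psi f g h p q)"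
proof -
  have 1: "(\<Sum>(a,u,b)\<leftarrow>P. \<Sum>q\<leftarrow>Q. Psi f g h (a,u,b) q) = (\<Sum>(a,u,b)\<leftarrow>P'. \<Sum>q\<leftarrow>Q. Psi f g h (a,u,b) q)"
    by (rule univ3[OF vsA' vsU vsB' P])
       (intro lin_sum_listI vsA' vsU vsB' PsiA PsiU PsiB)+
  have 2: "(\<Sum>(a,u,b)\<leftarrow>Q. \<Sum>p\<leftarrow>P'. Psi f g h p (a,u,b)) = (\<Sum>(a,u,b)\<leftarrow>Q'. \<Sum>p\<leftarrow>P'. Psi f g h p (a,u,b))"
    by (rule univ3[OF vsA' vsU vsB' Q])
       (intro lin_sum_listI vsA' vsU vsB' PsiA2 PsiU2 PsiB2)+
  have "(\<Sum>p\<leftarrow>P. \<Sum>q\<leftarrow>Q. Psi f g h p q) = (\<Sum>p\<leftarrow>P'. \<Sum>q\<leftarrow>Q. Psi f g h p q)"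
    using 1 by (simp add: case_prod_unfold)
  also have "\<dots> = (\<Sum>q\<leftarrow>Q. \<Sum>p\<leftarrow>P'. Psi f g h p q)" by (rule sum_list_swap)
  also have "\<dots> = (\<Sum>q\<leftarrow>Q'. \<Sum>p\<leftarrow>P'. Psi f g h p q)"
    using 2 by (simp add: case_prod_unfold)
  also have "\<dots> = (\<Sum>p\<leftarrow>P'. \<Sum>q\<leftarrow>Q'. Psi f g h p q)" by (rule sum_list_swap)
  finally show ?thesis .
qed

lemma pair_eq:
  "(\<Sum>x\<leftarrow>lr_pure (ab_mult sA sB mA mB) (ab_lact sA sB actA) (ab_ract sA sB actB) lam rho Phili Phiri Philri
       (tens2 sA sB L1, u) (tens2 sA sB L2, u'). fst x f h * g (snd x)) =
   (\<Sum>ab\<leftarrow>L1. \<Sum>ab'\<leftarrow>L2. Psi f g h (fst ab, u, snd ab) (fst ab', u', snd ab'))"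
  unfolding lr_pure_def Psi_def ts_pure_def
  apply (simp add: ab_mult_tens'[OF A B] ab_lact_tens[OF A B] ab_ract_tens[OF A B] tens2_ev[OF f h])
  apply (simp add: evs sum_list_mult_const[symmetric] tens2_ev[OF f h])
  apply (simp only: sum_list_swap[where xs=L2])
  apply (simp only: sum_list_swap[where xs=L1])
  apply (simp add: ac_simps)
  done

end
end


lemma sum_list_zeroI: "(\<And>x. x \<in> set xs \<Longrightarrow> F x = (0::'a::monoid_add)) \<Longrightarrow> sum_list (map F xs) = 0"
  by (induction xs) auto

lemma vs_sc2': "vector_space (sc2 :: 'k::field \<Rightarrow> ('x \<Rightarrow> 'y \<Rightarrow> 'k) \<Rightarrow> ('x \<Rightarrow> 'y \<Rightarrow> 'k))"
  by unfold_locales (simp_all add: sc2_def fun_eq_iff algebra_simps)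

lemma ev_lin: "Vector_Spaces.linear (sc2 :: 'k::field \<Rightarrow> ('x \<Rightarrow> 'y \<Rightarrow> 'k) \<Rightarrow> _) (*) (\<lambda>x. x f h)"
  unfolding lin_iff by (simp add: vs_sc2' sc2_def)

lemma sc2_tens_fst: "sc2 c (tens2 s1 s2 L) = tens2 s1 s2 [(s1 c v, w). (v, w) \<leftarrow> L]"
proof -
  have "sc2 c (tens2 s1 s2 L) f g = tens2 s1 s2 [(s1 c v, w). (v, w) \<leftarrow> L] f g" for f g
    by (cases "Vector_Spaces.linear s1 (*) f \<and> Vector_Spaces.linear s2 (*) g")
       (auto simp: sc2_def tens2_def comp_def case_prod_unfold lin_scale sum_list_const_mult[symmetric]
         mult.assoc)
  then show ?thesis by (auto simp: fun_eq_iff)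
qed

lemma tens2_nonlin: "\<not> (Vector_Spaces.linear s1 (*) f \<and> Vector_Spaces.linear s2 (*) g) \<Longrightarrow> tens2 s1 s2 L f g = 0"
  unfolding tens2_def by auto

lemma tens3_nonlin: "\<not> (Vector_Spaces.linear s1 (*) f \<and> Vector_Spaces.linear s2 (*) g \<and> Vector_Spaces.linear s3 (*) h)
   \<Longrightarrow> tens3 s1 s2 s3 L f g h = 0"
  unfolding tens3_def by auto

lemma lin_cmul: "Vector_Spaces.linear s (*) G \<Longrightarrow> Vector_Spaces.linear s ((*) :: 'k::field \<Rightarrow> _) (\<lambda>u. c * G u)"
  by (simp add: lin_iff algebra_simps)

lemma lr_carrierE: "T \<in> lr_carrier s M sU \<Longrightarrow>
   set (map fst (rep2 s sU M T)) \<subseteq> M \<and> tens2 s sU (rep2 s sU M T) = T"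
  unfolding lr_carrier_def using rep2_ok by blast

lemma tens2_rangeE: "x \<in> range (tens2 s1 s2) \<Longrightarrow> tens2 s1 s2 (rep2 s1 s2 UNIV x) = x"
  using rep2U by blast

context
  fixes sA :: "'k::field \<Rightarrow> 'a::ab_group_add \<Rightarrow> 'a" and sB :: "'k \<Rightarrow> 'b::ab_group_add \<Rightarrow> 'b"
    and sU :: "'k \<Rightarrow> 'u::ring_1 \<Rightarrow> 'u"
begin

lemma phi_char:
  assumes T: "T \<in> lr_carrier sc2 (ab_carrier sA sB) sU"
    and f: "Vector_Spaces.linear sA (*) f" and g: "Vector_Spaces.linear sU (*) g"
    and h: "Vector_Spaces.linear sB (*) h"
  shows "phi_map sA sU sB T f g h = T (\<lambda>x. x f h) g"
proof -
  let ?R = "rep2 sc2 sU (ab_carrier sA sB) T"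
  note R = lr_carrierE[OF T]
  have "phi_map sA sU sB T f g h = (\<Sum>p\<leftarrow>?R. fst p f h * g (snd p))"
    unfolding phi_map_def tens3_ev[OF f g h]
    apply (simp add: sum_list_concat' sum_list_concat_map comp_def case_prod_unfold)
    apply (rule arg_cong[where f=sum_list], rule map_cong[OF refl])
    subgoal for p
    proof -
      assume "p \<in> set ?R"
      then have "fst p \<in> range (tens2 sA sB)" using R unfolding ab_carrier_def by auto
      then have e1: "tens2 sA sB (rep2 sA sB UNIV (fst p)) = fst p" by (rule tens2_rangeE)
      have "fst p f h = tens2 sA sB (rep2 sA sB UNIV (fst p)) f h" by (simp only: e1)
      also have "\<dots> = (\<Sum>ab\<leftarrow>rep2 sA sB UNIV (fst p). f (fst ab) * h (snd ab))"
        by (simp add: tens2_ev[OF f h] case_prod_unfold)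
      finally have "fst p f h = (\<Sum>ab\<leftarrow>rep2 sA sB UNIV (fst p). f (fst ab) * h (snd ab))" .
      then show ?thesis by (simp add: sum_list_mult_const[symmetric] sum_list_const_mult[symmetric] ac_simps)
    qed
    done
  also have "\<dots> = T (\<lambda>x. x f h) g"
    using R tens2_ev[OF ev_lin g, of ?R] by (simp add: case_prod_unfold)
  finally show ?thesis .
qed

lemma phi_nonlin:
  "\<not> (Vector_Spaces.linear sA (*) f \<and> Vector_Spaces.linear sU (*) g \<and> Vector_Spaces.linear sB (*) h)
   \<Longrightarrow> phi_map sA sU sB T f g h = 0"
  unfolding phi_map_def by (rule tens3_nonlin)

end

lemma in_ab_carrier: "x \<in> ab_carrier sA sB \<Longrightarrow> tens2 sA sB (rep2 sA sB UNIV x) = x"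
  unfolding ab_carrier_def by (rule tens2_rangeE)

lemma ab_carrier_nonlin: "x \<in> ab_carrier sA sB \<Longrightarrow>
   \<not> (Vector_Spaces.linear sA (*) f \<and> Vector_Spaces.linear sB (*) h) \<Longrightarrow> x f h = 0"
  unfolding ab_carrier_def using tens2_nonlin by fastforce

context
  fixes sA :: "'k::field \<Rightarrow> 'a::ab_group_add \<Rightarrow> 'a" and sB :: "'k \<Rightarrow> 'b::ab_group_add \<Rightarrow> 'b"
    and sU :: "'k \<Rightarrow> 'u::ring_1 \<Rightarrow> 'u"
  assumes vsU: "vector_space sU"
begin

lemma phi_inj: "inj_on (phi_map sA sU sB) (lr_carrier sc2 (ab_carrier sA sB) sU)"
proof (rule inj_onI)
  fix T T' assume T: "T \<in> lr_carrier sc2 (ab_carrier sA sB) sU" and T': "T' \<in> lr_carrier sc2 (ab_carrier sA sB) sU"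
    and eq: "phi_map sA sU sB T = phi_map sA sU sB T'"
  let ?R = "rep2 sc2 sU (ab_carrier sA sB) T" and ?R' = "rep2 sc2 sU (ab_carrier sA sB) T'"
  note R = conjunct1[OF lr_carrierE[OF T]] conjunct2[OF lr_carrierE[OF T]]
    and R' = conjunct1[OF lr_carrierE[OF T']] conjunct2[OF lr_carrierE[OF T']]
  have "tens2 sc2 sU ?R = tens2 sc2 sU ?R'"
  proof (rule tens2_eqI)
    fix F :: "(('a \<Rightarrow> 'k) \<Rightarrow> ('b \<Rightarrow> 'k) \<Rightarrow> 'k) \<Rightarrow> 'k" and G :: "'u \<Rightarrow> 'k"
    assume F: "Vector_Spaces.linear sc2 (*) F" and G: "Vector_Spaces.linear sU (*) G"
    show "(\<Sum>(v,w)\<leftarrow>?R. F v * G w) = (\<Sum>(v,w)\<leftarrow>?R'. F v * G w)"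
    proof (rule core2[OF vsU])
      show "F (x + y) * G w = F x * G w + F y * G w" for x y w by (simp add: lin_add[OF F] distrib_right)
      show "F (sc2 c x) * G w = c * (F x * G w)" for c x w by (simp add: lin_scale[OF F])
      show "Vector_Spaces.linear sU (*) (\<lambda>w. F v * G w)" for v by (rule lin_cmul[OF G])
      fix g :: "'u \<Rightarrow> 'k" assume g: "Vector_Spaces.linear sU (*) g"
      have ev: "(\<Sum>(v,w)\<leftarrow>L. sc2 (g w) v) f h = (if Vector_Spaces.linear sA (*) f \<and> Vector_Spaces.linear sB (*) h
          then phi_map sA sU sB T0 f g h else 0)"
        if L: "set (map fst L) \<subseteq> ab_carrier sA sB" "tens2 sc2 sU L = T0" and T0: "T0 \<in> lr_carrier sc2 (ab_carrier sA sB) sU"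
        for L T0 f h
      proof (cases "Vector_Spaces.linear sA (*) f \<and> Vector_Spaces.linear sB (*) h")
        case True
        then show ?thesis
          using phi_char[OF T0 _ g, of f h] tens2_ev[OF ev_lin g, of L] L(2)
          by (simp add: fun2_sum_list_apply sc2_def case_prod_unfold mult.commute)
      next
        case False
        have "(\<Sum>(v,w)\<leftarrow>L. sc2 (g w) v) f h = (\<Sum>p\<leftarrow>L. g (snd p) * fst p f h)"
          by (simp add: fun2_sum_list_apply sc2_def case_prod_unfold)
        also have "\<dots> = 0"
          by (rule sum_list_zeroI) (use L(1) ab_carrier_nonlin[OF _ False] in auto)
        finally show ?thesis unfolding if_not_P[OF False] .
      qed
      show "(\<Sum>(v,w)\<leftarrow>?R. sc2 (g w) v) = (\<Sum>(v,w)\<leftarrow>?R'. sc2 (g w) v)"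
        by (intro ext) (simp only: ev[OF R(1) R(2) T] ev[OF R'(1) R'(2) T'] eq)
    qed
  qed
  then show "T = T'" using R(2) R'(2) by simp
qed


lemma fun3_eqI:
  assumes "\<And>f g h. Vector_Spaces.linear sA (*) f \<Longrightarrow> Vector_Spaces.linear sU (*) g \<Longrightarrow>
      Vector_Spaces.linear sB (*) h \<Longrightarrow> P f g h = Q f g h"
    and "\<And>f g h. \<not> (Vector_Spaces.linear sA (*) f \<and> Vector_Spaces.linear sU (*) g \<and>
      Vector_Spaces.linear sB (*) h) \<Longrightarrow> P f g h = (0::'k)"
    and "\<And>f g h. \<not> (Vector_Spaces.linear sA (*) f \<and> Vector_Spaces.linear sU (*) g \<and>
      Vector_Spaces.linear sB (*) h) \<Longrightarrow> Q f g h = 0"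
  shows "P = Q"
  using assms by (intro ext) metis

lemma C_intro: "set (map fst xs) \<subseteq> ab_carrier sA sB \<Longrightarrow> tens2 sc2 sU xs \<in> lr_carrier sc2 (ab_carrier sA sB) sU"
  unfolding lr_carrier_def by blast

lemma C_elim: "T \<in> lr_carrier sc2 (ab_carrier sA sB) sU \<Longrightarrow>
  (\<And>xs. set (map fst xs) \<subseteq> ab_carrier sA sB \<Longrightarrow> T = tens2 sc2 sU xs \<Longrightarrow> P) \<Longrightarrow> P"
  unfolding lr_carrier_def by blast

lemma phi_image: "phi_map sA sU sB ` lr_carrier sc2 (ab_carrier sA sB) sU = ts_carrier sA sU sB"
proof
  show "phi_map sA sU sB ` lr_carrier sc2 (ab_carrier sA sB) sU \<subseteq> ts_carrier sA sU sB"
    unfolding phi_map_def ts_carrier_def by blast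
  show "ts_carrier sA sU sB \<subseteq> phi_map sA sU sB ` lr_carrier sc2 (ab_carrier sA sB) sU"
  proof
    fix X assume "X \<in> ts_carrier sA sU sB"
    then obtain Z where Z: "X = tens3 sA sU sB Z" unfolding ts_carrier_def by blast
    let ?xs = "map (\<lambda>(a,u,b). (tens2 sA sB [(a,b)], u)) Z"
    have inC: "tens2 sc2 sU ?xs \<in> lr_carrier sc2 (ab_carrier sA sB) sU"
      by (rule C_intro) (auto simp: ab_carrier_def)
    have "phi_map sA sU sB (tens2 sc2 sU ?xs) = X"
      unfolding Z
    proof (rule fun3_eqI)
      fix f g h assume f: "Vector_Spaces.linear sA (*) f" and g: "Vector_Spaces.linear sU (*) g"
        and h: "Vector_Spaces.linear sB (*) h"
      show "phi_map sA sU sB (tens2 sc2 sU ?xs) f g h = tens3 sA sU sB Z f g h"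
        unfolding phi_char[OF inC f g h]
        by (simp add: tens2_ev[OF ev_lin g] tens3_ev[OF f g h] tens2_ev[OF f h]
            comp_def case_prod_unfold ac_simps)
    qed (simp_all add: phi_nonlin tens3_nonlin)
    then show "X \<in> phi_map sA sU sB ` lr_carrier sc2 (ab_carrier sA sB) sU" using inC by blast
  qed
qed

lemma phi_add:
  assumes x: "x \<in> lr_carrier sc2 (ab_carrier sA sB) sU" and y: "y \<in> lr_carrier sc2 (ab_carrier sA sB) sU"
  shows "phi_map sA sU sB (x + y) = phi_map sA sU sB x + phi_map sA sU sB y"
proof -
  have xy: "x + y \<in> lr_carrier sc2 (ab_carrier sA sB) sU"
  proof -
    obtain xs where xs: "set (map fst xs) \<subseteq> ab_carrier sA sB" "x = tens2 sc2 sU xs" using x by (rule C_elim)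
    obtain ys where ys: "set (map fst ys) \<subseteq> ab_carrier sA sB" "y = tens2 sc2 sU ys" using y by (rule C_elim)
    have eq: "x + y = tens2 sc2 sU (xs @ ys)" by (simp add: xs ys tens2_append)
    have sub: "set (map fst (xs @ ys)) \<subseteq> ab_carrier sA sB" using xs(1) ys(1) by simp
    show ?thesis unfolding eq by (rule C_intro[OF sub])
  qed
  show ?thesis
    by (rule fun3_eqI) (simp_all add: phi_char[OF xy] phi_char[OF x] phi_char[OF y] phi_nonlin)
qed

lemma phi_scale:
  assumes x: "x \<in> lr_carrier sc2 (ab_carrier sA sB) sU"
  shows "phi_map sA sU sB (sc2 c x) = sc3 c (phi_map sA sU sB x)"
proof -
  have cx: "sc2 c x \<in> lr_carrier sc2 (ab_carrier sA sB) sU"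
  proof -
    obtain xs where xs: "set (map fst xs) \<subseteq> ab_carrier sA sB" "x = tens2 sc2 sU xs" using x by (rule C_elim)
    have eq: "sc2 c x = tens2 sc2 sU [(sc2 c v, w). (v, w) \<leftarrow> xs]" by (simp add: xs sc2_tens_fst)
    have sub: "set (map fst [(sc2 c v, w). (v, w) \<leftarrow> xs]) \<subseteq> ab_carrier sA sB"
    proof
      fix z assume "z \<in> set (map fst [(sc2 c v, w). (v, w) \<leftarrow> xs])"
      then obtain v w where vw: "(v, w) \<in> set xs" "z = sc2 c v" by auto
      then have "v \<in> ab_carrier sA sB" using xs(1) by force
      then obtain L where "v = tens2 sA sB L" unfolding ab_carrier_def by blast
      then show "z \<in> ab_carrier sA sB" using vw by (simp add: sc2_tens_fst ab_carrier_def)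
    qed
    show ?thesis unfolding eq by (rule C_intro[OF sub])
  qed
  show ?thesis
    apply (rule fun3_eqI)
      apply (simp only: sc3_def phi_char[OF cx] phi_char[OF x])
      apply (simp add: sc2_def sc3_def)
     apply (simp_all add: phi_nonlin sc3_def)
    done
qed

lemma phi_one:
  "phi_map sA sU sB (lr_one sc2 (ab_one sA sB oneA oneB) sU) = ts_one sA sU sB oneA oneB"
proof -
  have o: "lr_one sc2 (ab_one sA sB oneA oneB) sU \<in> lr_carrier sc2 (ab_carrier sA sB) sU"
    unfolding lr_one_def by (rule C_intro) (auto simp: ab_one_def ab_carrier_def)
  show ?thesis unfolding ts_one_def
  proof (rule fun3_eqI)
    fix f g h assume f: "Vector_Spaces.linear sA (*) f" and g: "Vector_Spaces.linear sU (*) g"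
      and h: "Vector_Spaces.linear sB (*) h"
    show "phi_map sA sU sB (lr_one sc2 (ab_one sA sB oneA oneB) sU) f g h = tens3 sA sU sB [(oneA, 1, oneB)] f g h"
      unfolding phi_char[OF o f g h]
      by (simp add: lr_one_def ab_one_def tens2_ev[OF ev_lin g] tens3_ev[OF f g h]
          tens2_ev[OF f h] ac_simps)
  qed (simp_all add: phi_nonlin tens3_nonlin)
qed

end

context
  fixes sH :: "'k::field \<Rightarrow> 'h::ring_1 \<Rightarrow> 'h"
    and D :: "'h \<Rightarrow> ('h \<times> 'h) list" and e :: "'h \<Rightarrow> 'k"
    and Phi Phii :: "('h \<times> 'h \<times> 'h) list"
    and sA :: "'k \<Rightarrow> 'a::ab_group_add \<Rightarrow> 'a" and mA :: "'a \<Rightarrow> 'a \<Rightarrow> 'a" and oneA :: 'a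
    and actA :: "'h \<Rightarrow> 'a \<Rightarrow> 'a"
    and sB :: "'k \<Rightarrow> 'b::ab_group_add \<Rightarrow> 'b" and mB :: "'b \<Rightarrow> 'b \<Rightarrow> 'b" and oneB :: 'b
    and actB :: "'b \<Rightarrow> 'h \<Rightarrow> 'b"
    and sU :: "'k \<Rightarrow> 'u::ring_1 \<Rightarrow> 'u"
    and lam :: "'u \<Rightarrow> ('h \<times> 'u) list" and rho :: "'u \<Rightarrow> ('u \<times> 'h) list"
    and Phil Phili :: "('h \<times> 'h \<times> 'u) list"
    and Phir Phiri :: "('u \<times> 'h \<times> 'h) list"
    and Philr Philri :: "('h \<times> 'u \<times> 'h) list"
  assumes H: "qbialg sH D e Phi Phii"
    and A: "lmod_alg sH D e Phi sA mA oneA actA"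
    and B: "rmod_alg sH D e Phii sB mB oneB actB"
    and U: "bicomod_alg sH D e Phi sU lam rho Phil Phili Phir Phiri Philr Philri"
begin

lemma phi_mult:
  assumes x: "x \<in> lr_carrier sc2 (ab_carrier sA sB) sU" and y: "y \<in> lr_carrier sc2 (ab_carrier sA sB) sU"
  shows "phi_map sA sU sB (lr_mult sc2 (ab_carrier sA sB) (ab_mult sA sB mA mB) (ab_lact sA sB actA)
                    (ab_ract sA sB actB) sU lam rho Phili Phiri Philri x y)
    = ts_mult sA sU sB mA actA mB actB lam rho Phili Phiri Philri (phi_map sA sU sB x) (phi_map sA sU sB y)"
    (is "phi_map sA sU sB ?M = _")
proof -
  let ?Rx = "rep2 sc2 sU (ab_carrier sA sB) x" and ?Ry = "rep2 sc2 sU (ab_carrier sA sB) y"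
  note Rx = conjunct1[OF lr_carrierE[OF x]] conjunct2[OF lr_carrierE[OF x]]
  note Ry = conjunct1[OF lr_carrierE[OF y]] conjunct2[OF lr_carrierE[OF y]]
  let ?lp = "lr_pure (ab_mult sA sB mA mB) (ab_lact sA sB actA) (ab_ract sA sB actB) lam rho Phili Phiri Philri"
  have Mdef: "?M = tens2 sc2 sU (concat [?lp p q. p \<leftarrow> ?Rx, q \<leftarrow> ?Ry])"
    unfolding lr_mult_def ..
  have sub: "set (map fst (concat [?lp p q. p \<leftarrow> ?Rx, q \<leftarrow> ?Ry])) \<subseteq> ab_carrier sA sB"
    by (auto simp: lr_pure_def ab_mult_def ab_carrier_def)
  have MC: "?M \<in> lr_carrier sc2 (ab_carrier sA sB) sU"
    unfolding Mdef by (rule C_intro[OF vsU[OF H A B U] sub])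
  show ?thesis
  proof (rule fun3_eqI[OF vsU[OF H A B U]])
    fix f g h assume f: "Vector_Spaces.linear sA (*) f" and g: "Vector_Spaces.linear sU (*) g"
      and h: "Vector_Spaces.linear sB (*) h"
    show "phi_map sA sU sB ?M f g h = ts_mult sA sU sB mA actA mB actB lam rho Phili Phiri Philri
            (phi_map sA sU sB x) (phi_map sA sU sB y) f g h"
    proof -
      let ?Ps = "Psi mA actA mB actB lam rho Phili Phiri Philri f g h"
      let ?Px = "concat (map (\<lambda>(x, u). map (\<lambda>(a, b). (a, u, b)) (rep2 sA sB UNIV x)) ?Rx)"
      let ?Py = "concat (map (\<lambda>(x, u). map (\<lambda>(a, b). (a, u, b)) (rep2 sA sB UNIV x)) ?Ry)"
      have px: "phi_map sA sU sB x = tens3 sA sU sB ?Px" unfolding phi_map_def ..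
      have py: "phi_map sA sU sB y = tens3 sA sU sB ?Py" unfolding phi_map_def ..
      have pr: "p = (tens2 sA sB (rep2 sA sB UNIV (fst p)), snd p)" if "fst p \<in> ab_carrier sA sB" for p
        using in_ab_carrier[OF that] by simp
      have "phi_map sA sU sB ?M f g h = ?M (\<lambda>x. x f h) g" by (rule phi_char[OF MC f g h])
      also have "\<dots> = (\<Sum>z\<leftarrow>concat [?lp p q. p \<leftarrow> ?Rx, q \<leftarrow> ?Ry]. fst z f h * g (snd z))"
        unfolding Mdef tens2_ev[OF ev_lin g] by (simp add: case_prod_unfold)
      also have "\<dots> = (\<Sum>p\<leftarrow>?Rx. \<Sum>q\<leftarrow>?Ry. \<Sum>z\<leftarrow>?lp p q. fst z f h * g (snd z))"
        by (simp add: sum_list_concat' sum_list_concat_map comp_def)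
      also have "\<dots> = (\<Sum>p\<leftarrow>?Rx. \<Sum>q\<leftarrow>?Ry. \<Sum>ab\<leftarrow>rep2 sA sB UNIV (fst p). \<Sum>ab'\<leftarrow>rep2 sA sB UNIV (fst q).
            ?Ps (fst ab, snd p, snd ab) (fst ab', snd q, snd ab'))"
      proof (rule arg_cong[where f=sum_list], rule map_cong[OF refl], rule arg_cong[where f=sum_list], rule map_cong[OF refl])
        fix p q assume p: "p \<in> set ?Rx" and q: "q \<in> set ?Ry"
        have fp: "fst p \<in> ab_carrier sA sB" using p Rx(1) by auto
        have fq: "fst q \<in> ab_carrier sA sB" using q Ry(1) by auto
        have "?lp p q = ?lp (tens2 sA sB (rep2 sA sB UNIV (fst p)), snd p) (tens2 sA sB (rep2 sA sB UNIV (fst q)), snd q)"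
          using pr[OF fp] pr[OF fq] by simp
        then show "(\<Sum>z\<leftarrow>?lp p q. fst z f h * g (snd z)) = (\<Sum>ab\<leftarrow>rep2 sA sB UNIV (fst p). \<Sum>ab'\<leftarrow>rep2 sA sB UNIV (fst q).
            ?Ps (fst ab, snd p, snd ab) (fst ab', snd q, snd ab'))"
          using pair_eq[OF H A B U f g h, of "rep2 sA sB UNIV (fst p)" "snd p" "rep2 sA sB UNIV (fst q)" "snd q"]
          by simp
      qed
      also have "\<dots> = (\<Sum>p\<leftarrow>?Rx. \<Sum>ab\<leftarrow>rep2 sA sB UNIV (fst p). \<Sum>q\<leftarrow>?Ry. \<Sum>ab'\<leftarrow>rep2 sA sB UNIV (fst q).
            ?Ps (fst ab, snd p, snd ab) (fst ab', snd q, snd ab'))"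
        by (rule arg_cong[where f=sum_list], rule map_cong[OF refl], rule sum_list_swap)
      also have "\<dots> = (\<Sum>P\<leftarrow>?Px. \<Sum>Q\<leftarrow>?Py. ?Ps P Q)"
        by (simp add: sum_list_concat' sum_list_concat_map comp_def case_prod_unfold)
      also have "\<dots> = (\<Sum>P\<leftarrow>rep3 sA sU sB (phi_map sA sU sB x). \<Sum>Q\<leftarrow>rep3 sA sU sB (phi_map sA sU sB y). ?Ps P Q)"
        by (rule Psi_repl[OF H A B U f g h]) (simp_all only: px py rep3_ok)
      also have "\<dots> = ts_mult sA sU sB mA actA mB actB lam rho Phili Phiri Philri
            (phi_map sA sU sB x) (phi_map sA sU sB y) f g h"
        unfolding ts_mult_def tens3_ev[OF f g h]
        by (simp add: Psi_def[OF H A B U] sum_list_concat' sum_list_concat_map comp_def case_prod_unfold)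
      finally show ?thesis .
    qed
  next
    fix f g h assume "\<not> (Vector_Spaces.linear sA (*) f \<and> Vector_Spaces.linear sU (*) g \<and> Vector_Spaces.linear sB (*) h)"
    then show "phi_map sA sU sB ?M f g h = 0" by (rule phi_nonlin)
  next
    fix f g h assume "\<not> (Vector_Spaces.linear sA (*) f \<and> Vector_Spaces.linear sU (*) g \<and> Vector_Spaces.linear sB (*) h)"
    then show "ts_mult sA sU sB mA actA mB actB lam rho Phili Phiri Philri
            (phi_map sA sU sB x) (phi_map sA sU sB y) f g h = 0"
      unfolding ts_mult_def by (rule tens3_nonlin)
  qed
qed

end

theorem proposition2p5:
  fixes sH :: "'k::field \<Rightarrow> 'h::ring_1 \<Rightarrow> 'h"
    and D :: "'h \<Rightarrow> ('h \<times> 'h) list" and e :: "'h \<Rightarrow> 'k"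
    and Phi Phii :: "('h \<times> 'h \<times> 'h) list"
    and sA :: "'k \<Rightarrow> 'a::ab_group_add \<Rightarrow> 'a" and mA :: "'a \<Rightarrow> 'a \<Rightarrow> 'a" and oneA :: 'a
    and actA :: "'h \<Rightarrow> 'a \<Rightarrow> 'a"
    and sB :: "'k \<Rightarrow> 'b::ab_group_add \<Rightarrow> 'b" and mB :: "'b \<Rightarrow> 'b \<Rightarrow> 'b" and oneB :: 'b
    and actB :: "'b \<Rightarrow> 'h \<Rightarrow> 'b"
    and sU :: "'k \<Rightarrow> 'u::ring_1 \<Rightarrow> 'u"
    and lam :: "'u \<Rightarrow> ('h \<times> 'u) list" and rho :: "'u \<Rightarrow> ('u \<times> 'h) list"
    and Phil Phili :: "('h \<times> 'h \<times> 'u) list"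
    and Phir Phiri :: "('u \<times> 'h \<times> 'h) list"
    and Philr Philri :: "('h \<times> 'u \<times> 'h) list"
  assumes H: "qbialg sH D e Phi Phii"
    and A: "lmod_alg sH D e Phi sA mA oneA actA"
    and B: "rmod_alg sH D e Phii sB mB oneB actB"
    and U: "bicomod_alg sH D e Phi sU lam rho Phil Phili Phir Phiri Philr Philri"
  shows "bimod_alg sH D e Phi Phii sc2 (ab_carrier sA sB) (ab_mult sA sB mA mB)
           (ab_one sA sB oneA oneB) (ab_lact sA sB actA) (ab_ract sA sB actB)
    \<and> (let C = lr_carrier sc2 (ab_carrier sA sB) sU;
           C' = ts_carrier sA sU sB;
           f = phi_map sA sU sB
       in bij_betw f C C'
          \<and> (\<forall>x\<in>C. \<forall>y\<in>C. f (x + y) = f x + f y)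
          \<and> (\<forall>c. \<forall>x\<in>C. f (sc2 c x) = sc3 c (f x))
          \<and> (\<forall>x\<in>C. \<forall>y\<in>C.
               f (lr_mult sc2 (ab_carrier sA sB) (ab_mult sA sB mA mB) (ab_lact sA sB actA)
                    (ab_ract sA sB actB) sU lam rho Phili Phiri Philri x y)
               = ts_mult sA sU sB mA actA mB actB lam rho Phili Phiri Philri (f x) (f y))
          \<and> f (lr_one sc2 (ab_one sA sB oneA oneB) sU) = ts_one sA sU sB oneA oneB)"
  proof -
  have vU: "vector_space sU" by (rule vsU[OF H A B U])
  show ?thesis
    unfolding Let_def bij_betw_def
    using part1[OF A B] phi_inj[OF vU, where sA=sA and sB=sB] phi_image[OF vU, where sA=sA and sB=sB]
      phi_add[OF vU, where sA=sA and sB=sB] phi_scale[OF vU, where sA=sA and sB=sB]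
      phi_mult[OF H A B U] phi_one[OF vU, where sA=sA and sB=sB and oneA=oneA and oneB=oneB]
    by auto
qed

end
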